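(* Let $n\ge1$, $\nu\ge1$ be integers and $\delta\in\{0,1,2\}$, and suppose it is not the case that $\delta=0$ and $\nu$ is odd. Then the chromatic number of $\mathcal{O}^{(2\nu+\delta)}_{2^n}$ is $2^{\nu+\delta-1}+1$.
   Context: Let $V^{2\nu+\delta}$ be the set of tuples $\vec a=(a_1,\ldots,a_{2\nu+\delta})\in(\mathbb{Z}_{2^n})^{2\nu+\delta}$ such that some $a_i$ is a unit of $\mathbb{Z}_{2^n}$. Write $\vec a\sim\vec b$ if $\vec a=\lambda\vec b$ for some $\lambda\in\mathbb{Z}_{2^n}^\times$, let $[\vec a]$ denote the equivalence class and $V^{2\nu+\delta}_\sim$ the set of classes. Let $G_{2\nu+\delta,\Delta}=\begin{pmatrix}0&I_\nu&\\ &0&\\ &&\Delta\end{pmatrix}$ over $\mathbb{Z}_{2^n}$ (first two block sizes $\nu$, unspecified blocks zero), where $\Delta$ is empty if $\delta=0$, $\Delta=(1)$ if $\delta=1$, and $\Delta=\begin{pmatrix}z&1\\0&z\end{pmatrix}$ if $\delta=2$, with $z$ a fixed unit of $\mathbb{Z}_{2^n}$. The orthogonal graph $\mathcal{O}^{(2\nu+\delta)}_{2^n}$ has vertex set $\{[\vec a]\in V^{2\nu+\delta}_\sim:\vec a\,G_{2\nu+\delta,\Delta}\,\vec a^t=0\}$, with $[\vec a]$ adjacent to $[\vec b]$ iff $\vec a(G_{2\nu+\delta,\Delta}+G_{2\nu+\delta,\Delta}^t)\vec b^t\in\mathbb{Z}_{2^n}^\times$. *)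

theory Defs
  imports Main
begin

text \<open>Elements of Z_{2^n} are represented by integers in {0..<2^n}; tuples of length
m = 2 nu + delta by functions nat => int, indices 0..m-1, zero outside.\<close>

definition unit_mod :: "nat \<Rightarrow> int \<Rightarrow> bool" where
  "unit_mod n x \<longleftrightarrow> coprime x (2 ^ n)"

definition Gmat :: "nat \<Rightarrow> nat \<Rightarrow> int \<Rightarrow> nat \<Rightarrow> nat \<Rightarrow> int" where
  "Gmat \<nu> \<delta> z i j =
     (if i < \<nu> \<and> j = \<nu> + i then 1
      else if \<delta> = 1 \<and> i = 2*\<nu> \<and> j = 2*\<nu> then 1
      else if \<delta> = 2 \<and> i = 2*\<nu> \<and> j = 2*\<nu> then z
      else if \<delta> = 2 \<and> i = 2*\<nu> \<and> j = 2*\<nu>+1 then 1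
      else if \<delta> = 2 \<and> i = 2*\<nu>+1 \<and> j = 2*\<nu>+1 then z
      else 0)"

definition Vset :: "nat \<Rightarrow> nat \<Rightarrow> (nat \<Rightarrow> int) set" where
  "Vset n m = {a. (\<forall>i<m. 0 \<le> a i \<and> a i < 2 ^ n) \<and> (\<forall>i\<ge>m. a i = 0)
                  \<and> (\<exists>i<m. unit_mod n (a i))}"

definition vsim :: "nat \<Rightarrow> nat \<Rightarrow> (nat \<Rightarrow> int) \<Rightarrow> (nat \<Rightarrow> int) \<Rightarrow> bool" where
  "vsim n m a b \<longleftrightarrow> (\<exists>c. unit_mod n c \<and> (\<forall>i<m. a i mod 2 ^ n = (c * b i) mod 2 ^ n))"

definition vclass :: "nat \<Rightarrow> nat \<Rightarrow> (nat \<Rightarrow> int) \<Rightarrow> (nat \<Rightarrow> int) set" where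
  "vclass n m a = {b \<in> Vset n m. vsim n m b a}"

definition bform :: "nat \<Rightarrow> (nat \<Rightarrow> nat \<Rightarrow> int) \<Rightarrow> (nat \<Rightarrow> int) \<Rightarrow> (nat \<Rightarrow> int) \<Rightarrow> int" where
  "bform m M a b = (\<Sum>i<m. \<Sum>j<m. a i * M i j * b j)"

definition orth_vertices :: "nat \<Rightarrow> nat \<Rightarrow> nat \<Rightarrow> int \<Rightarrow> (nat \<Rightarrow> int) set set" where
  "orth_vertices n \<nu> \<delta> z =
     {vclass n (2*\<nu>+\<delta>) a | a. a \<in> Vset n (2*\<nu>+\<delta>)
        \<and> bform (2*\<nu>+\<delta>) (Gmat \<nu> \<delta> z) a a mod 2 ^ n = 0}"

text \<open>Adjacency: a (G + G^t) b^t is a unit (independent of representatives).\<close>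
definition orth_adj :: "nat \<Rightarrow> nat \<Rightarrow> nat \<Rightarrow> int \<Rightarrow> (nat \<Rightarrow> int) set \<Rightarrow> (nat \<Rightarrow> int) set \<Rightarrow> bool" where
  "orth_adj n \<nu> \<delta> z X Y \<longleftrightarrow>
     (\<exists>a\<in>X. \<exists>b\<in>Y. unit_mod n
        (bform (2*\<nu>+\<delta>) (\<lambda>i j. Gmat \<nu> \<delta> z i j + Gmat \<nu> \<delta> z j i) a b))"

definition proper_colouring :: "'v set \<Rightarrow> ('v \<Rightarrow> 'v \<Rightarrow> bool) \<Rightarrow> nat \<Rightarrow> ('v \<Rightarrow> nat) \<Rightarrow> bool" where
  "proper_colouring V E k f \<longleftrightarrow>
     (\<forall>x\<in>V. f x < k) \<and> (\<forall>x\<in>V. \<forall>y\<in>V. x \<noteq> y \<and> E x y \<longrightarrow> f x \<noteq> f y)"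

definition chromatic_number :: "'v set \<Rightarrow> ('v \<Rightarrow> 'v \<Rightarrow> bool) \<Rightarrow> nat" where
  "chromatic_number V E = (LEAST k. \<exists>f. proper_colouring V E k f)"

end

theory Submission
  imports Defs "Berlekamp_Zassenhaus.Distinct_Degree_Factorization"
begin

type_synonym gf2 = "bool mod_ring"

lemma gf2_fermat:
  assumes irr: "irreducible (g::gf2 poly)"
  shows "p ^ (2 ^ degree g) mod g = p mod g"
proof -
  interpret poly_mod_type_irr "CARD(bool)" g by (unfold_locales, auto simp add: irr)
  show ?thesis
  proof (cases "p mod g = 0")
    case True
    then have "g dvd p" by (simp add: mod_eq_0_iff_dvd)
    then have "g dvd p ^ (2 ^ degree g)" by (meson dvd_power dvd_trans zero_less_numeral zero_less_power)
    then show ?thesis using True by (simp add: mod_eq_0_iff_dvd)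
  next
    case False
    have "p mod g \<in> carrier (mult_of R)"
      using False mod_in_carrier[of p] by (simp add: carrier_mult_of R_def)
    from element_power_order_eq_1'[OF this]
    have "(p mod g) ^ (2 ^ degree g) mod g = p mod g" by simp
    then show ?thesis by (simp add: power_mod)
  qed
qed

lemma irr_deg_pos: "irreducible (g::gf2 poly) \<Longrightarrow> degree g > 0"
  using irreducible_connect_field[of g] unfolding irreducible\<^sub>d_def by auto

lemma monic_irr_dvd_eq:
  assumes "irreducible (a::gf2 poly)" "irreducible b" "monic a" "monic b" "a dvd b"
  shows "a = b"
proof -
  obtain c where b: "b = a * c" using assms(5) by (elim dvdE)
  have "is_unit c" using irreducibleD[OF assms(2) b] irreducible_not_unit[OF assms(1)] by auto
  then have dc: "degree c = 0" by (simp add: is_unit_field_poly)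
  have "lead_coeff b = lead_coeff a * lead_coeff c" using b by (simp add: lead_coeff_mult)
  then have "monic c" using assms(3,4) by simp
  then have "c = 1" using dc monic_degree_0 by blast
  then show ?thesis using b by simp
qed

lemma sum_pow2_bound: "(\<Sum>k\<in>{1..m}. (2::nat)^k) + 2 = 2^(Suc m)"
  by (induction m) (auto simp: atLeastAtMostSuc_conv)

lemma prod_irr_dvd:
  fixes Q :: "gf2 poly"
  assumes "finite A" "A \<subseteq> {q. irreducible q \<and> monic q}" "\<forall>a\<in>A. a dvd Q"
  shows "\<Prod>A dvd Q"
  using assms
proof (induction A rule: finite_induct)
  case empty
  then show ?case by simp
next
  case (insert a B)
  have irr: "irreducible a" "monic a" using insert.prems by auto
  have "\<not> a dvd \<Prod>B"
  proof
    assume "a dvd \<Prod>B"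
    then obtain b where "b \<in> B" "a dvd b" using irreducible_dvd_prod[OF irr(1), of id B] by auto
    then have "a = b" using monic_irr_dvd_eq[of a b] irr insert.prems(1) by auto
    then show False using insert.hyps \<open>b \<in> B\<close> by auto
  qed
  have pa: "prime_elem a" using irr(1) by (simp add: prime_elem_iff_irreducible)
  have "a dvd Q" "\<Prod>B dvd Q" using insert by auto
  from divides_mult[OF this prime_elem_imp_coprime[OF pa \<open>\<not> a dvd \<Prod>B\<close>]]
  show ?case using insert by simp
qed

lemma one_less_pow2: "k \<ge> 1 \<Longrightarrow> (1::nat) < 2^k"
  by (rule one_less_power) auto

lemma gf2_irr_exists:
  assumes d: "d \<ge> 1"
  shows "\<exists>f::gf2 poly. irreducible f \<and> degree f = d"
proof (rule ccontr)
  assume none: "\<not> ?thesis"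
  define X :: "gf2 poly" where "X = monom 1 1"
  define P where "P k = X ^ (2^k) - X" for k :: nat
  have card2: "CARD(bool) = 2" by simp
  have small: "2 * degree g \<le> d" if g: "irreducible g" "g dvd P d" for g
  proof -
    define e where "e = degree g"
    have e1: "e \<ge> 1" using irr_deg_pos[OF g(1)] e_def by auto
    have "\<not> e > d"
    proof
      assume "e > d"
      then show False using degree_divisor(2)[OF g(1) e_def[symmetric], of d] d g(2) card2
        by (simp add: P_def X_def)
    qed
    moreover have "e \<noteq> d" using none g(1) e_def by auto
    moreover have "\<not> (e < d \<and> d < 2 * e)"
    proof
      assume lt: "e < d \<and> d < 2 * e"
      have ferm: "p ^ (2^e) mod g = p mod g" for p using gf2_fermat[OF g(1)] e_def by simp
      define y where "y = X ^ (2^(d-e))"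
      have pw: "(2::nat)^d = 2^(d-e) * 2^e" using lt by (simp add: power_add[symmetric])
      have "X ^ (2^d) = y ^ (2^e)"
        unfolding y_def pw by (rule power_mult)
      then have "X ^ (2^d) mod g = y mod g" using ferm by simp
      moreover have "X ^ (2^d) mod g = X mod g" using g(2) unfolding P_def
        by (simp add: mod_eq_dvd_iff_poly)
      ultimately have "g dvd X - y" 
        by (simp add: mod_eq_dvd_iff_poly)
      then have dv: "g dvd P (d - e)" unfolding P_def y_def
        by (metis dvd_minus_iff minus_diff_eq)
      have "1 \<le> d - e" "d - e < e" using lt by auto
      then show False using degree_divisor(2)[OF g(1) e_def[symmetric], of "d - e"] dv card2
        by (simp add: P_def X_def)
    qed
    ultimately show ?thesis unfolding e_def by linarith
  qed
  have XP: "X ^ (2^k) = monom 1 (2^k)" for k unfolding X_def by (simp add: monom_power)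
  have degP: "degree (P k) = 2^k" if "k \<ge> 1" for k
  proof -
    have "(1::nat) < 2^k" using that by (rule one_less_pow2)
    then show ?thesis unfolding P_def XP unfolding X_def
      by (simp add: degree_monom_eq degree_minus_eq_right)
  qed
  have P0: "P k \<noteq> 0" if "k \<ge> 1" for k
  proof
    assume "P k = 0" 
    then have "degree (P k) = 0" by simp
    then show False using degP[OF that] by simp
  qed
  have monicP: "monic (P d)"
  proof -
    have "(1::nat) < 2^d" using d by (rule one_less_pow2)
    then show ?thesis using degP[OF d] unfolding P_def XP unfolding X_def
      by (simp add: degree_monom_eq)
  qed
  have "pderiv (P d) = - 1"
  proof -
    have two: "(2::gf2) = 0" using of_nat_card_eq_0[where 'a=bool] by simp
    have "of_nat (2^d) = (0::gf2)"
      using d by (simp add: two)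
    then show ?thesis unfolding P_def XP unfolding X_def
      by (simp add: pderiv_diff pderiv_monom)
  qed
  then have "separable (P d)" unfolding separable_def by simp
  then have sf: "square_free (P d)" by (rule separable_imp_square_free)
  obtain A where A: "finite A" "P d = \<Prod>A" "A \<subseteq> {q. irreducible q \<and> monic q}"
    using monic_square_free_irreducible_factorization[OF monicP sf] by auto
  define Q where "Q = (\<Prod>k\<in>{1..d div 2}. P k)"
  have "\<forall>a\<in>A. a dvd Q"
  proof
    fix a assume a: "a \<in> A"
    then have ai: "irreducible a" using A by auto
    have "a dvd \<Prod>A" using dvd_prodI[OF A(1) a, of id] by simp
    then have "a dvd P d" using A by simp
    then have "2 * degree a \<le> d" using small ai by auto
    moreover have "degree a \<ge> 1" using irr_deg_pos[OF ai] by simp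
    ultimately have mem: "degree a \<in> {1..d div 2}" by auto
    have "a dvd P (degree a)" using degree_divisor(1)[OF ai refl] card2
      by (simp add: P_def X_def)
    also have "P (degree a) dvd Q" unfolding Q_def using mem by (rule dvd_prodI[rotated]) simp
    finally show "a dvd Q" .
  qed
  then have "P d dvd Q" using prod_irr_dvd[OF A(1) A(3)] A(2) by simp
  moreover have "Q \<noteq> 0" unfolding Q_def using P0 by auto
  ultimately have "degree (P d) \<le> degree Q" by (simp add: dvd_imp_degree_le)
  moreover have "degree Q = (\<Sum>k\<in>{1..d div 2}. 2^k)"
    unfolding Q_def using P0 degP by (subst degree_prod_eq_sum_degree) auto
  ultimately have "2^d \<le> (\<Sum>k\<in>{1..d div 2}. (2::nat)^k)" using degP[OF d] by simp
  also have "\<dots> < 2^(Suc (d div 2))" using sum_pow2_bound[of "d div 2"] by simp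
  also have "\<dots> \<le> 2^d" using d by (intro power_increasing) auto
  finally show False by simp
qed


lemma gf2_two: "(2::gf2) = 0"
  using of_nat_card_eq_0[where 'a=bool] by simp
lemma gf2_of_int_0: "(of_int x :: gf2) = 0 \<longleftrightarrow> even x"
  unfolding of_int_of_int_mod_ring by (transfer, auto)
lemma gf2_cases: "(x::gf2) = 0 \<or> x = 1"
proof -
  obtain i where "i < 2" "x = of_nat i" using surj_of_nat_mod_ring[of x] by auto
  then show ?thesis by (cases i) auto
qed
lemma gf2_add_self[simp]: "(x::gf2) + x = 0"
  using gf2_cases[of x] gf2_two by auto
lemma gf2_mult_self[simp]: "(x::gf2) * x = x"
  using gf2_cases[of x] by auto
lemma gf2_uminus[simp]: "- (x::gf2) = x"
  by (metis add_eq_0_iff2 gf2_add_self)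
lemma gf2_minus[simp]: "(x::gf2) - y = x + y"
  by (metis diff_conv_add_uminus gf2_uminus)
lemma gf2_of_int_1: "(of_int x :: gf2) = 1 \<longleftrightarrow> odd x"
  using gf2_cases[of "of_int x"] gf2_of_int_0[of x] by auto
lemma gf2_neq0: "(x::gf2) \<noteq> 0 \<longleftrightarrow> x = 1"
  using gf2_cases[of x] by auto

definition Fn :: "nat \<Rightarrow> (nat \<Rightarrow> gf2) set" where
  "Fn m = {u. \<forall>i\<ge>m. u i = 0}"

definition vadd :: "(nat \<Rightarrow> gf2) \<Rightarrow> (nat \<Rightarrow> gf2) \<Rightarrow> nat \<Rightarrow> gf2" where
  "vadd u v = (\<lambda>i. u i + v i)"

definition dotp :: "nat \<Rightarrow> (nat \<Rightarrow> gf2) \<Rightarrow> (nat \<Rightarrow> gf2) \<Rightarrow> gf2" where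
  "dotp k x y = (\<Sum>i<k. x i * y i)"

lemma Fn_finite: "finite (Fn m)"
proof -
  have "Fn m = {f. \<forall>x. (x \<in> {..<m} \<longrightarrow> f x \<in> UNIV) \<and> (x \<notin> {..<m} \<longrightarrow> f x = 0)}"
    unfolding Fn_def by auto
  then show ?thesis using finite_set_of_finite_funs[of "{..<m}" "UNIV::gf2 set" 0] by simp
qed

lemma Fn_card: "card (Fn m) = 2 ^ m"
proof (induction m)
  case 0
  have "Fn 0 = {\<lambda>i. 0}" unfolding Fn_def by auto
  then show ?case by simp
next
  case (Suc m)
  define h where "h = (\<lambda>(u::nat\<Rightarrow>gf2, c::gf2). u(m := c))"
  have inj: "inj_on h (Fn m \<times> UNIV)"
  proof (rule inj_onI)
    fix p q assume p: "p \<in> Fn m \<times> UNIV" and q: "q \<in> Fn m \<times> UNIV" and e: "h p = h q"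
    obtain u c where pu: "p = (u, c)" by (cases p)
    obtain v d where qv: "q = (v, d)" by (cases q)
    have um: "u m = 0" "v m = 0" using p q pu qv unfolding Fn_def by auto
    have eq: "u(m:=c) = v(m:=d)" using e pu qv unfolding h_def by simp
    have cd: "c = d" using fun_cong[OF eq, of m] by simp
    have "u i = v i" for i
    proof (cases "i = m")
      case True then show ?thesis using um by simp
    next
      case False then show ?thesis using fun_cong[OF eq, of i] by simp
    qed
    then have "u = v" by (rule ext)
    then show "p = q" using pu qv cd by simp
  qed
  have img: "h ` (Fn m \<times> UNIV) = Fn (Suc m)"
  proof
    show "h ` (Fn m \<times> UNIV) \<subseteq> Fn (Suc m)" unfolding h_def Fn_def by auto
  next
    show "Fn (Suc m) \<subseteq> h ` (Fn m \<times> UNIV)"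
    proof
      fix w assume w: "w \<in> Fn (Suc m)"
      have "w = h (w(m := 0), w m)" unfolding h_def by simp
      moreover have "w(m := 0) \<in> Fn m" using w unfolding Fn_def by auto
      ultimately show "w \<in> h ` (Fn m \<times> UNIV)" by blast
    qed
  qed
  have "card (Fn (Suc m)) = card (Fn m \<times> (UNIV::gf2 set))"
    using card_image[OF inj] img by simp
  also have "\<dots> = 2^m * 2" using Suc by (simp add: card_cartesian_product)
  finally show ?case by simp
qed

lemma vadd_Fn: "u \<in> Fn m \<Longrightarrow> v \<in> Fn m \<Longrightarrow> vadd u v \<in> Fn m"
  unfolding Fn_def vadd_def by auto

lemma vadd_cancel: "vadd (vadd u v) v = u"
  unfolding vadd_def by (simp add: add.assoc)

lemma half_card:
  fixes l :: "(nat \<Rightarrow> gf2) \<Rightarrow> gf2"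
  assumes add: "\<And>x y. x \<in> Fn m \<Longrightarrow> y \<in> Fn m \<Longrightarrow> l (vadd x y) = l x + l y"
    and x0: "x0 \<in> Fn m" "l x0 \<noteq> 0"
  shows "card {x\<in>Fn m. l x = 0} = 2^m div 2"
proof -
  define Z where "Z = {x\<in>Fn m. l x = 0}"
  define Ones where "Ones = {x\<in>Fn m. l x = 1}"
  have lx0: "l x0 = 1" using x0 gf2_neq0 by auto
  define t where "t = (\<lambda>x. vadd x x0)"
  have "inj_on t Z" unfolding t_def by (rule inj_onI) (metis vadd_cancel)
  moreover have "t ` Z = Ones"
  proof
    show "t ` Z \<subseteq> Ones" unfolding t_def Z_def Ones_def using add x0 lx0 vadd_Fn by auto
  next
    show "Ones \<subseteq> t ` Z"
    proof
      fix y assume y: "y \<in> Ones"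
      have "y = t (t y)" unfolding t_def by (simp add: vadd_cancel)
      moreover have "t y \<in> Z" using y unfolding t_def Z_def Ones_def using add x0 lx0 vadd_Fn by auto
      ultimately show "y \<in> t ` Z" by blast
    qed
  qed
  ultimately have cZO: "card Z = card Ones" by (metis card_image)
  have "Z \<union> Ones = Fn m" unfolding Z_def Ones_def using gf2_cases by auto
  moreover have "Z \<inter> Ones = {}" unfolding Z_def Ones_def by auto
  moreover have "finite Z" "finite Ones" unfolding Z_def Ones_def using Fn_finite by auto
  ultimately have "card Z + card Ones = 2^m" using Fn_card card_Un_disjoint by metis
  then show ?thesis using cZO Z_def by simp
qed

lemma half_card_ge:
  fixes l :: "(nat \<Rightarrow> gf2) \<Rightarrow> gf2"
  assumes add: "\<And>x y. x \<in> Fn m \<Longrightarrow> y \<in> Fn m \<Longrightarrow> l (vadd x y) = l x + l y"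
  shows "card {x\<in>Fn m. l x = 0} \<ge> 2^m div 2"
proof (cases "\<exists>x0\<in>Fn m. l x0 \<noteq> 0")
  case True
  then show ?thesis using half_card[OF add] by auto
next
  case False
  then have "{x\<in>Fn m. l x = 0} = Fn m" by auto
  then show ?thesis using Fn_card by simp
qed


lemma gf2poly_add_self[simp]: "(p::gf2 poly) + p = 0"
proof -
  have "smult (1 + 1) p = p + p" by (simp only: smult_add_left smult_1_left)
  then have "p + p = smult (1 + 1) p" by simp
  then show ?thesis by (simp add: gf2_two)
qed
lemma gf2poly_uminus[simp]: "- (p::gf2 poly) = p"
  by (metis add_eq_0_iff2 gf2poly_add_self)
lemma gf2poly_minus: "(p::gf2 poly) - q = p + q"
  by (metis diff_conv_add_uminus gf2poly_uminus)

lemma frob: "((p::gf2 poly) + q) ^ (2^j) = p ^ (2^j) + q ^ (2^j)"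
  using add_power_prime_poly_mod_ring[of p q j] by simp

lemma frob_smult: "(smult (c::gf2) p) ^ (2^j) = smult c (p ^ (2^j))"
proof -
  have "c ^ (2^j) = c" using gf2_cases[of c] by auto
  then show ?thesis by (simp add: smult_power)
qed

definition pv :: "nat \<Rightarrow> (nat \<Rightarrow> gf2) \<Rightarrow> gf2 poly" where
  "pv k x = (\<Sum>i<k. monom (x i) i)"

lemma coeff_pv: "coeff (pv k x) i = (if i < k then x i else 0)"
  unfolding pv_def by (simp add: coeff_sum coeff_monom)

lemma degree_pv: "k \<ge> 1 \<Longrightarrow> degree (pv k x) < k"
proof -
  assume k: "k \<ge> 1"
  have "degree (pv k x) \<le> k - 1"
    by (rule degree_le) (auto simp: coeff_pv)
  then show ?thesis using k by simp
qed

lemma pv_inj: "x \<in> Fn k \<Longrightarrow> y \<in> Fn k \<Longrightarrow> pv k x = pv k y \<Longrightarrow> x = y"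
proof (rule ext)
  fix i assume x: "x \<in> Fn k" and y: "y \<in> Fn k" and e: "pv k x = pv k y"
  show "x i = y i"
  proof (cases "i < k")
    case True
    then show ?thesis using arg_cong[OF e, of "\<lambda>p. coeff p i"] by (simp add: coeff_pv)
  next
    case False
    then show ?thesis using x y unfolding Fn_def by auto
  qed
qed

lemma pv_zero: "pv k (\<lambda>i. 0) = 0"
  unfolding pv_def by simp

lemma pv_vadd: "pv k (vadd x y) = pv k x + pv k y"
  unfolding pv_def vadd_def by (simp add: sum.distrib add_monom[symmetric])

lemma pv_coeff: "degree p < k \<Longrightarrow> pv k (\<lambda>i. coeff p i) = p"
  by (rule poly_eqI) (auto simp: coeff_pv intro: coeff_eq_0)

lemma monom_smult1: "monom (c::gf2) i = smult c (monom 1 i)"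
  by (metis mult.right_neutral smult_monom)

lemma pv_mult: "pv k x * w = (\<Sum>i<k. smult (x i) (monom 1 i * w))"
  unfolding pv_def sum_distrib_right
  by (intro sum.cong refl) (subst monom_smult1, simp only: mult_smult_left)

lemma dotp_Suc: "dotp (Suc k) x y = dotp k x y + x k * y k"
  unfolding dotp_def by simp

lemma dotp_comm: "dotp k x y = dotp k y x"
  unfolding dotp_def by (simp add: mult.commute)

lemma dotp_vadd_right: "dotp k x (vadd y z) = dotp k x y + dotp k x z"
  unfolding dotp_def vadd_def by (simp add: distrib_left sum.distrib)

lemma dotp_vadd_left: "dotp k (vadd y z) x = dotp k y x + dotp k z x"
  unfolding dotp_def vadd_def by (simp add: distrib_right sum.distrib)

locale ffield =
  fixes f :: "gf2 poly" and k :: nat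
  assumes irr: "irreducible f" and degf: "degree f = k"
begin

lemma k_pos: "k \<ge> 1"
  using irr_deg_pos[OF irr] degf by simp

lemma f_nz: "f \<noteq> 0"
  using irr by auto

lemma dvd_small: "degree p < k \<Longrightarrow> f dvd p \<Longrightarrow> p = 0"
proof (rule ccontr)
  assume "degree p < k" "f dvd p" "p \<noteq> 0"
  then have "degree f \<le> degree p" by (simp add: dvd_imp_degree_le)
  then show False using \<open>degree p < k\<close> degf by simp
qed

lemma f_prime: "f dvd p * q \<Longrightarrow> f dvd p \<or> f dvd q"
proof -
  have "prime_elem f" using irr by (simp add: prime_elem_iff_irreducible)
  then show "f dvd p * q \<Longrightarrow> f dvd p \<or> f dvd q" by (simp add: prime_elem_dvd_mult_iff)
qed

lemma fermat: "f dvd p ^ (2^k) - p"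
  using gf2_fermat[OF irr, of p] degf by (simp add: mod_eq_dvd_iff_poly)

definition goodf :: "(gf2 poly \<Rightarrow> gf2) \<Rightarrow> bool" where
  "goodf \<phi> \<longleftrightarrow> (\<forall>p q. \<phi> (p + q) = \<phi> p + \<phi> q) \<and> (\<forall>c p. \<phi> (smult c p) = c * \<phi> p)
     \<and> (\<forall>p. \<phi> p = \<phi> (p mod f)) \<and> (\<forall>w. \<not> f dvd w \<longrightarrow> (\<exists>i<k. \<phi> (monom 1 i * w) \<noteq> 0))"

definition Vec :: "(gf2 poly \<Rightarrow> gf2) \<Rightarrow> gf2 poly \<Rightarrow> nat \<Rightarrow> gf2" where
  "Vec \<phi> w = (\<lambda>i. if i < k then \<phi> (monom 1 i * w) else 0)"

lemma Vec_Fn: "Vec \<phi> w \<in> Fn k"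
  unfolding Vec_def Fn_def by auto

context
  fixes \<phi> assumes g: "goodf \<phi>"
begin

lemma phi_add: "\<phi> (p + q) = \<phi> p + \<phi> q"
  using g unfolding goodf_def by blast
lemma phi_smult: "\<phi> (smult c p) = c * \<phi> p"
  using g unfolding goodf_def by blast
lemma phi_mod: "\<phi> p = \<phi> (p mod f)"
  using g unfolding goodf_def by blast
lemma phi_nondeg: "\<not> f dvd w \<Longrightarrow> \<exists>i<k. \<phi> (monom 1 i * w) \<noteq> 0"
  using g unfolding goodf_def by blast
lemma phi_zero: "\<phi> 0 = 0"
  using phi_add[of 0 0] by simp
lemma phi_sum: "\<phi> (\<Sum>i\<in>A. h i) = (\<Sum>i\<in>A. \<phi> (h i))"
  by (induction A rule: infinite_finite_induct) (auto simp: phi_zero phi_add)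
lemma phi_cong: "f dvd p - q \<Longrightarrow> \<phi> p = \<phi> q"
proof -
  assume "f dvd p - q"
  then have "p mod f = q mod f" by (simp add: mod_eq_dvd_iff_poly)
  then show ?thesis using phi_mod[of p] phi_mod[of q] by simp
qed
lemma phi_dvd: "f dvd p \<Longrightarrow> \<phi> p = 0"
  using phi_cong[of p 0] phi_zero by simp

lemma dot_Vec: "dotp k x (Vec \<phi> w) = \<phi> (pv k x * w)"
  unfolding pv_mult phi_sum dotp_def Vec_def by (simp add: phi_smult)

lemma Vec_inj: "Vec \<phi> w = Vec \<phi> w' \<Longrightarrow> f dvd w - w'"
proof (rule ccontr)
  assume e: "Vec \<phi> w = Vec \<phi> w'" and nd: "\<not> f dvd w - w'"
  obtain i where i: "i < k" "\<phi> (monom 1 i * (w - w')) \<noteq> 0" using phi_nondeg[OF nd] by auto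
  have "\<phi> (monom 1 i * w) = \<phi> (monom 1 i * w')" using fun_cong[OF e, of i] i(1) unfolding Vec_def by simp
  moreover have "monom 1 i * (w - w') = monom 1 i * w + monom 1 i * w'"
    by (simp add: gf2poly_minus distrib_left)
  ultimately show False using i(2) phi_add by simp
qed

end

definition lam :: "gf2 poly \<Rightarrow> gf2" where
  "lam p = coeff (p mod f) (k - 1)"

lemma lam_good: "goodf lam"
  unfolding goodf_def
proof (intro conjI allI impI)
  fix p q show "lam (p + q) = lam p + lam q" unfolding lam_def by (simp add: poly_mod_add_left)
next
  fix c p show "lam (smult c p) = c * lam p" unfolding lam_def by (simp add: mod_smult_left)
next
  fix p show "lam p = lam (p mod f)" unfolding lam_def by simp
next
  fix w assume nd: "\<not> f dvd w"
  define g where "g = w mod f"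
  have g0: "g \<noteq> 0" using nd unfolding g_def by (simp add: mod_eq_0_iff_dvd)
  have dg: "degree g < k" unfolding g_def using degf f_nz k_pos
    by (metis degree_mod_less' g0 g_def)
  define i where "i = k - 1 - degree g"
  have ik: "i < k" unfolding i_def using k_pos by simp
  have dm: "degree (monom (1::gf2) i * g) < k"
    using dg g0 k_pos unfolding i_def by (simp add: degree_mult_eq degree_monom_eq)
  have "(monom 1 i * w) mod f = (monom 1 i * g) mod f" unfolding g_def by (simp add: mod_mult_right_eq)
  also have "\<dots> = monom 1 i * g" using dm degf by (simp add: mod_poly_less)
  finally have "lam (monom 1 i * w) = coeff (monom 1 i * g) (i + degree g)"
    unfolding lam_def i_def using dg by simp
  also have "\<dots> = lead_coeff g" by (simp add: coeff_monom_mult)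
  finally show "\<exists>i<k. lam (monom 1 i * w) \<noteq> 0" using ik g0 by auto
qed


definition tr :: "gf2 poly \<Rightarrow> gf2" where
  "tr p = coeff ((\<Sum>i<k. p ^ (2^i)) mod f) 0"

lemma tr_add: "tr (p + q) = tr p + tr q"
  unfolding tr_def frob by (simp add: sum.distrib poly_mod_add_left)

lemma tr_zero: "tr 0 = 0"
  unfolding tr_def by simp

lemma tr_smult: "tr (smult c p) = c * tr p"
  using gf2_cases[of c] tr_zero by auto

lemma tr_sum: "tr (\<Sum>i\<in>A. h i) = (\<Sum>i\<in>A. tr (h i))"
  by (induction A rule: infinite_finite_induct) (auto simp: tr_zero tr_add)

lemma tr_cong: "f dvd p - q \<Longrightarrow> tr p = tr q"
proof -
  assume "f dvd p - q"
  then have pq: "p mod f = q mod f" by (simp add: mod_eq_dvd_iff_poly)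
  have "(\<Sum>i<k. p ^ (2^i)) mod f = (\<Sum>i<k. p ^ (2^i) mod f) mod f" by (simp add: mod_sum_eq)
  also have "\<dots> = (\<Sum>i<k. q ^ (2^i) mod f) mod f"
  proof (rule arg_cong[where f="\<lambda>x. x mod f"], rule sum.cong[OF refl])
    fix i assume "i \<in> {..<k}"
    have "p ^ (2^i) mod f = (p mod f) ^ (2^i) mod f" by (simp add: power_mod)
    also have "\<dots> = (q mod f) ^ (2^i) mod f" by (simp add: pq)
    also have "\<dots> = q ^ (2^i) mod f" by (simp add: power_mod)
    finally show "p ^ (2^i) mod f = q ^ (2^i) mod f" .
  qed
  also have "\<dots> = (\<Sum>i<k. q ^ (2^i)) mod f" by (simp add: mod_sum_eq)
  finally show ?thesis unfolding tr_def by simp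
qed

lemma tr_mod: "tr p = tr (p mod f)"
  by (rule tr_cong) (simp add: mod_eq_dvd_iff_poly[symmetric])

lemma tr_dvd: "f dvd p \<Longrightarrow> tr p = 0"
  using tr_cong[of p 0] tr_zero by simp

lemma swap_eq_diff: "(a::gf2 poly) + b = c + d \<Longrightarrow> b - c = d - a"
  by (simp add: algebra_simps)

lemma tr_sq: "tr (p ^ 2) = tr p"
proof -
  define g where "g i = p ^ (2^i)" for i
  define S1 where "S1 = (\<Sum>i<k. g (Suc i))"
  define S0 where "S0 = (\<Sum>i<k. g i)"
  have A1: "(\<Sum>i<Suc k. g i) = g 0 + S1" unfolding S1_def by (rule sum.lessThan_Suc_shift)
  have A2: "(\<Sum>i<Suc k. g i) = S0 + g k" unfolding S0_def by (rule sum.lessThan_Suc)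
  have "S1 - S0 = g k - g 0" by (rule swap_eq_diff) (use A1 A2 in simp)
  moreover have "f dvd g k - g 0" unfolding g_def using fermat by simp
  ultimately have "f dvd S1 - S0" by simp
  then have m: "S1 mod f = S0 mod f" by (simp add: mod_eq_dvd_iff_poly)
  have "(\<Sum>i<k. (p^2) ^ (2^i)) = S1" unfolding S1_def
  proof (rule sum.cong[OF refl])
    fix i show "(p^2) ^ (2^i) = g (Suc i)" unfolding g_def by (simp only: power_mult[symmetric] power_Suc)
  qed
  then show ?thesis using m unfolding tr_def S0_def g_def by simp
qed

lemma tr_one: "odd k \<Longrightarrow> tr 1 = 1"
proof -
  assume ok: "odd k"
  have "of_nat k = (1::gf2)"
  proof -
    obtain j where "k = 2 * j + 1" using ok oddE by blast
    then show ?thesis by (simp add: gf2_two)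
  qed
  then have "(\<Sum>i<k. (1::gf2 poly) ^ (2^i)) = 1" by (simp add: of_nat_poly)
  moreover have "(1::gf2 poly) mod f = 1" using degf k_pos by (simp add: mod_poly_less)
  ultimately show ?thesis unfolding tr_def by simp
qed

lemma tr_nondeg:
  assumes ok: "odd k" and nd: "\<not> f dvd w"
  shows "\<exists>i<k. tr (monom 1 i * w) \<noteq> 0"
proof (rule ccontr)
  assume all0: "\<not> ?thesis"
  have pf: "prime_elem f" using irr by (simp add: prime_elem_iff_irreducible)
  have gcd1: "gcd f w = 1"
    using prime_elem_imp_coprime[OF pf nd] by (rule coprime_imp_gcd_eq_1)
  define s where "s = fst (bezout_coefficients f w)"
  define t where "t = snd (bezout_coefficients f w)"
  have st: "s * f + t * w = 1"
    using bezout_coefficients_fst_snd[of f w] gcd1 unfolding s_def t_def by simp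
  define u where "u = t mod f"
  have du: "degree u < k"
  proof (cases "u = 0")
    case True then show ?thesis using k_pos by simp
  next
    case False then show ?thesis using degree_mod_less'[OF f_nz False[unfolded u_def]] degf
      unfolding u_def by simp
  qed
  have "f dvd u * w - 1"
  proof -
    have "u * w - 1 = (u - t) * w - s * f" using st by (simp add: algebra_simps)
    moreover have "f dvd u - t" unfolding u_def by (simp add: mod_eq_dvd_iff_poly[symmetric])
    ultimately show ?thesis by simp
  qed
  then have "tr (u * w) = tr 1" by (rule tr_cong)
  then have "tr (u * w) = 1" using tr_one[OF ok] by simp
  moreover have "tr (u * w) = 0"
  proof -
    have "u * w = pv k (\<lambda>i. coeff u i) * w" using pv_coeff[OF du] by simp
    also have "\<dots> = (\<Sum>i<k. smult (coeff u i) (monom 1 i * w))" by (rule pv_mult)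
    finally have "tr (u * w) = (\<Sum>i<k. coeff u i * tr (monom 1 i * w))"
      by (simp add: tr_sum tr_smult)
    also have "\<dots> = 0" using all0 by simp
    finally show ?thesis .
  qed
  ultimately show False by simp
qed

lemma tr_good: "odd k \<Longrightarrow> goodf tr"
  unfolding goodf_def using tr_add tr_smult tr_mod tr_nondeg by blast

subsection \<open>The parabolic construction\<close>

definition AP :: "(nat \<Rightarrow> gf2) \<Rightarrow> (nat \<Rightarrow> gf2) \<Rightarrow> nat \<Rightarrow> gf2" where
  "AP a x = Vec lam (pv k a * pv k x)"

lemma AP_Fn: "AP a x \<in> Fn k"
  unfolding AP_def by (rule Vec_Fn)

lemma AP_sym: "dotp k x (AP a y) = dotp k y (AP a x)"
  unfolding AP_def dot_Vec[OF lam_good] by (simp add: ac_simps)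

lemma zero_Fn: "(\<lambda>i. 0) \<in> Fn m"
  unfolding Fn_def by simp

lemma pv_eq0: "x \<in> Fn k \<Longrightarrow> pv k x = 0 \<Longrightarrow> x = (\<lambda>i. 0)"
  using pv_inj[of x k "\<lambda>i. 0"] zero_Fn pv_zero by simp

lemma AP_inj:
  assumes a: "a \<in> Fn k" and b: "b \<in> Fn k" and x: "x \<in> Fn k" "x \<noteq> (\<lambda>i. 0)"
    and e: "AP a x = AP b x"
  shows "a = b"
proof -
  have "f dvd pv k a * pv k x - pv k b * pv k x"
    using Vec_inj[OF lam_good] e unfolding AP_def by blast
  then have "f dvd (pv k a - pv k b) * pv k x" by (simp add: algebra_simps)
  then have "f dvd pv k a - pv k b \<or> f dvd pv k x" by (rule f_prime)
  moreover have "\<not> f dvd pv k x"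
    using dvd_small[OF degree_pv[OF k_pos]] pv_eq0[OF x(1)] x(2) by blast
  ultimately have "f dvd pv k a - pv k b" by simp
  moreover have "degree (pv k a - pv k b) < k"
    using degree_pv[OF k_pos] by (simp add: degree_diff_less)
  ultimately have "pv k a - pv k b = 0" using dvd_small by blast
  then show ?thesis using pv_inj[OF a b] by simp
qed

lemma AP_cover:
  assumes x: "x \<in> Fn k" "x \<noteq> (\<lambda>i. 0)" and y: "y \<in> Fn k"
  shows "\<exists>a\<in>Fn k. AP a x = y"
proof -
  have sub: "(\<lambda>a. AP a x) ` Fn k \<subseteq> Fn k" using AP_Fn by auto
  have inj: "inj_on (\<lambda>a. AP a x) (Fn k)"
    by (rule inj_onI) (rule AP_inj[OF _ _ x], assumption+)
  have "(\<lambda>a. AP a x) ` Fn k = Fn k" by (rule endo_inj_surj[OF Fn_finite sub inj])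
  then have "y \<in> (\<lambda>a. AP a x) ` Fn k" using y by simp
  then show ?thesis by blast
qed

subsection \<open>The hyperbolic construction\<close>

definition sq :: "gf2 poly \<Rightarrow> gf2 poly" where
  "sq p = p ^ (2^(k-1))"

lemma sq_sq: "f dvd (sq p)^2 - p"
proof -
  have "(sq p)^2 = p ^ (2^k)" unfolding sq_def using k_pos
    by (simp add: power_mult[symmetric] power_Suc[symmetric] mult.commute)
  then show ?thesis using fermat by simp
qed

lemma sq_add: "sq (p + q) = sq p + sq q"
  unfolding sq_def by (rule frob)

definition rH :: "(nat \<Rightarrow> gf2) \<Rightarrow> (nat \<Rightarrow> gf2) \<Rightarrow> gf2" where
  "rH a X = tr (pv k a * (pv k X)^2)"

definition wH :: "(nat \<Rightarrow> gf2) \<Rightarrow> (nat \<Rightarrow> gf2) \<Rightarrow> gf2 poly" where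
  "wH a X = pv k a * pv k X + smult (rH a X + X k) (sq (pv k a))"

definition MH :: "(nat \<Rightarrow> gf2) \<Rightarrow> (nat \<Rightarrow> gf2) \<Rightarrow> nat \<Rightarrow> gf2" where
  "MH a X = (\<lambda>i. if i < k then tr (monom 1 i * wH a X) else if i = k then rH a X else 0)"

lemma MH_Fn: "MH a X \<in> Fn (Suc k)"
  unfolding MH_def Fn_def by auto

context
  assumes ok: "odd k"
begin

lemma dot_MH: "dotp (Suc k) Y (MH a X) = tr (pv k Y * wH a X) + Y k * rH a X"
proof -
  have "dotp k Y (MH a X) = dotp k Y (Vec tr (wH a X))"
    unfolding dotp_def MH_def Vec_def by (rule sum.cong) auto
  also have "\<dots> = tr (pv k Y * wH a X)" by (rule dot_Vec[OF tr_good[OF ok]])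
  finally show ?thesis unfolding dotp_Suc by (simp add: MH_def)
qed

lemma tr_sqrt: "tr (q * sq p) = tr (p * q^2)"
proof -
  have "tr (q * sq p) = tr ((q * sq p)^2)" by (rule tr_sq[symmetric])
  also have "\<dots> = tr (q^2 * (sq p)^2)" by (simp add: power_mult_distrib)
  also have "\<dots> = tr (q^2 * p)"
  proof (rule tr_cong)
    have "q^2 * (sq p)^2 - q^2 * p = q^2 * ((sq p)^2 - p)" by (simp add: algebra_simps)
    then show "f dvd q^2 * (sq p)^2 - q^2 * p" using sq_sq by simp
  qed
  finally show ?thesis by (simp add: mult.commute)
qed

lemma MH_expand: "tr (pv k Y * wH a X) = tr (pv k Y * pv k a * pv k X) + (rH a X + X k) * rH a Y"
proof -
  have "pv k Y * wH a X = pv k Y * pv k a * pv k X + smult (rH a X + X k) (pv k Y * sq (pv k a))"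
    unfolding wH_def by (simp add: algebra_simps)
  then have "tr (pv k Y * wH a X) = tr (pv k Y * pv k a * pv k X) + (rH a X + X k) * tr (pv k Y * sq (pv k a))"
    by (simp add: tr_add tr_smult)
  moreover have "tr (pv k Y * sq (pv k a)) = rH a Y" unfolding rH_def by (rule tr_sqrt)
  ultimately show ?thesis by simp
qed

lemma MH_sym: "dotp (Suc k) Y (MH a X) = dotp (Suc k) X (MH a Y)"
proof -
  have T: "tr (pv k Y * pv k a * pv k X) = tr (pv k X * pv k a * pv k Y)" by (simp add: ac_simps)
  show ?thesis unfolding dot_MH MH_expand T by (simp add: algebra_simps)
qed

lemma MH_iso: "dotp (Suc k) X (MH a X) = 0"
proof -
  have T: "tr (pv k X * pv k a * pv k X) = rH a X" unfolding rH_def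
    by (simp add: ac_simps power2_eq_square)
  show ?thesis unfolding dot_MH MH_expand T by (simp add: algebra_simps gf2_two)
qed

lemma MH_inj:
  assumes a: "a \<in> Fn k" and b: "b \<in> Fn k" and X: "X \<in> Fn (Suc k)" "X \<noteq> (\<lambda>i. 0)"
    and e: "MH a X = MH b X"
  shows "a = b"
proof (rule ccontr)
  assume ne: "a \<noteq> b"
  define c where "c = pv k a + pv k b"
  define pX where "pX = pv k X"
  define r where "r = rH a X"
  define t where "t = r + X k"
  have dc: "degree c < k" unfolding c_def using degree_pv[OF k_pos] by (simp add: degree_add_less)
  have cf: "\<not> f dvd c"
  proof
    assume "f dvd c"
    then have "c = 0" using dvd_small dc by blast
    then have "pv k a = pv k b" unfolding c_def by (metis add_eq_0_iff gf2poly_uminus)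
    then show False using pv_inj[OF a b] ne by simp
  qed
  have rr: "rH b X = r" using fun_cong[OF e, of k] unfolding r_def MH_def by simp
  have "Vec tr (wH a X) = Vec tr (wH b X)"
  proof
    fix i show "Vec tr (wH a X) i = Vec tr (wH b X) i"
      using fun_cong[OF e, of i] unfolding MH_def Vec_def by (cases "i < k") auto
  qed
  then have "f dvd wH a X - wH b X" by (rule Vec_inj[OF tr_good[OF ok]])
  moreover have "wH a X - wH b X = c * pX + smult t (sq c)"
    unfolding wH_def c_def pX_def t_def rr[folded r_def] r_def sq_add
    by (simp add: gf2poly_minus algebra_simps smult_add_right)
  ultimately have dv: "f dvd c * pX + smult t (sq c)" by simp
  show False
  proof (cases "t = 0")
    case True
    then have "f dvd c * pX" using dv by simp
    then have "f dvd pX" using cf f_prime by blast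
    then have "pX = 0" using dvd_small degree_pv[OF k_pos] unfolding pX_def by blast
    then have X0: "\<forall>i<k. X i = 0" unfolding pX_def by (metis coeff_pv coeff_0)
    have "r = 0" unfolding r_def rH_def using \<open>pX = 0\<close> unfolding pX_def by (simp add: tr_zero)
    then have "X k = 0" using True unfolding t_def by simp
    then have "X = (\<lambda>i. 0)" using X0 X(1) unfolding Fn_def
      by (auto intro!: ext) (metis less_Suc_eq not_le)
    then show False using X(2) by simp
  next
    case False
    then have t1: "t = 1" using gf2_neq0 by simp
    then have dv1: "f dvd c * pX + sq c" using dv by simp
    have "(c * pX + sq c)^2 = c^2 * pX^2 + (sq c)^2"
      using frob[of "c * pX" "sq c" 1] by (simp add: power_mult_distrib)
    moreover have "f dvd (c * pX + sq c)^2" using dv1 by (simp add: power2_eq_square)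
    ultimately have "f dvd c^2 * pX^2 + (sq c)^2" by simp
    moreover have "f dvd (sq c)^2 + c" using sq_sq[of c] by (simp add: gf2poly_minus)
    ultimately have "f dvd (c^2 * pX^2 + (sq c)^2) + ((sq c)^2 + c)" by (rule dvd_add)
    moreover have "(c^2 * pX^2 + (sq c)^2) + ((sq c)^2 + c) = c * (c * pX^2 + 1)"
      by (simp add: algebra_simps power2_eq_square)
    ultimately have "f dvd c * (c * pX^2 + 1)" by simp
    then have "f dvd c * pX^2 + 1" using cf f_prime by blast
    then have "tr (c * pX^2 + 1) = 0" by (rule tr_dvd)
    then have "tr (c * pX^2) + 1 = 0" using tr_one[OF ok] by (simp add: tr_add)
    then have "tr (c * pX^2) = 1" using gf2_cases[of "tr (c * pX^2)"] by auto
    moreover have "tr (c * pX^2) = r + rH b X" unfolding c_def pX_def r_def rH_def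
      by (simp add: distrib_right tr_add)
    ultimately show False using rr by simp
  qed
qed

lemma MH_cover:
  assumes X: "X \<in> Fn (Suc k)" "X \<noteq> (\<lambda>i. 0)" and Y: "Y \<in> Fn (Suc k)"
    and XY: "dotp (Suc k) X Y = 0"
  shows "\<exists>a\<in>Fn k. MH a X = Y"
proof -
  define T where "T = {Z \<in> Fn (Suc k). dotp (Suc k) X Z = 0}"
  obtain j where j: "X j \<noteq> 0" using X(2) by auto
  have jk: "j < Suc k"
  proof (rule ccontr)
    assume "\<not> j < Suc k"
    then have "X j = 0" using X(1) unfolding Fn_def by auto
    then show False using j by simp
  qed
  define e where "e = (\<lambda>i. if i = j then (1::gf2) else 0)"
  have eF: "e \<in> Fn (Suc k)" unfolding e_def Fn_def using jk by auto
  have "dotp (Suc k) X e = (\<Sum>i<Suc k. if i = j then X j else 0)"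
    unfolding dotp_def by (rule sum.cong) (auto simp: e_def)
  also have "\<dots> = X j" using jk by (simp add: sum.delta)
  finally have "dotp (Suc k) X e = X j" .
  then have cT: "card T = 2^(Suc k) div 2" unfolding T_def
    using half_card[of "Suc k" "dotp (Suc k) X", OF _ eF] j dotp_vadd_right by auto
  have sub: "(\<lambda>a. MH a X) ` Fn k \<subseteq> T" unfolding T_def using MH_Fn MH_iso by auto
  have inj: "inj_on (\<lambda>a. MH a X) (Fn k)"
    by (rule inj_onI) (rule MH_inj[OF _ _ X], assumption+)
  have "card ((\<lambda>a. MH a X) ` Fn k) = 2^k" using card_image[OF inj] Fn_card by simp
  moreover have "finite T" unfolding T_def using Fn_finite by simp
  ultimately have "(\<lambda>a. MH a X) ` Fn k = T" using card_subset_eq[OF _ sub] cT by simp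
  moreover have "Y \<in> T" unfolding T_def using Y XY by simp
  ultimately show ?thesis by blast
qed

end

end


definition aniso :: "nat \<Rightarrow> gf2 \<Rightarrow> gf2 \<Rightarrow> gf2" where
  "aniso \<delta> z w = (if \<delta> = 1 then z * z else if \<delta> = 2 then z * z + z * w + w * w else 0)"

definition Qf :: "nat \<Rightarrow> nat \<Rightarrow> (nat \<Rightarrow> gf2) \<Rightarrow> gf2" where
  "Qf \<nu> \<delta> u = dotp \<nu> u (\<lambda>i. u (\<nu> + i)) + aniso \<delta> (u (2*\<nu>)) (u (2*\<nu>+1))"

definition Bf :: "nat \<Rightarrow> nat \<Rightarrow> (nat \<Rightarrow> gf2) \<Rightarrow> (nat \<Rightarrow> gf2) \<Rightarrow> gf2" where
  "Bf \<nu> \<delta> u v = dotp \<nu> u (\<lambda>i. v (\<nu> + i)) + dotp \<nu> (\<lambda>i. u (\<nu> + i)) v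
     + (if \<delta> = 2 then u (2*\<nu>) * v (2*\<nu>+1) + u (2*\<nu>+1) * v (2*\<nu>) else 0)"

definition Sset :: "nat \<Rightarrow> nat \<Rightarrow> (nat \<Rightarrow> gf2) set" where
  "Sset \<nu> \<delta> = {u \<in> Fn (2*\<nu>+\<delta>). u \<noteq> (\<lambda>i. 0) \<and> Qf \<nu> \<delta> u = 0}"

lemma polar: "Qf \<nu> \<delta> (vadd u v) = Qf \<nu> \<delta> u + Qf \<nu> \<delta> v + Bf \<nu> \<delta> u v"
proof -
  have d: "dotp \<nu> (vadd u v) (\<lambda>i. vadd u v (\<nu> + i)) = dotp \<nu> u (\<lambda>i. u (\<nu> + i)) + dotp \<nu> v (\<lambda>i. v (\<nu> + i))
      + dotp \<nu> u (\<lambda>i. v (\<nu> + i)) + dotp \<nu> (\<lambda>i. u (\<nu> + i)) v"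
    unfolding dotp_def vadd_def sum.distrib[symmetric]
    by (rule sum.cong) (simp_all add: algebra_simps)
  show ?thesis unfolding Qf_def Bf_def d unfolding aniso_def vadd_def
    by (simp add: algebra_simps gf2_two)
qed

lemma Bf_self: "Bf \<nu> \<delta> u u = 0"
  unfolding Bf_def dotp_def by (simp add: mult.commute gf2_two)

lemma Bf_sym: "Bf \<nu> \<delta> u v = Bf \<nu> \<delta> v u"
  unfolding Bf_def dotp_def by (simp add: algebra_simps)

lemma Bf_add: "Bf \<nu> \<delta> u (vadd v w) = Bf \<nu> \<delta> u v + Bf \<nu> \<delta> u w"
  unfolding Bf_def dotp_def vadd_def by (simp add: algebra_simps sum.distrib)

lemma Bf_polar: "Bf \<nu> \<delta> u v = Qf \<nu> \<delta> (vadd u v) - Qf \<nu> \<delta> u - Qf \<nu> \<delta> v"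
  using polar[of \<nu> \<delta> u v] by (simp add: algebra_simps gf2_two)

lemma Sset_finite: "finite (Sset \<nu> \<delta>)"
  unfolding Sset_def using Fn_finite by simp

subsection \<open>Totally singular sets are small\<close>

definition Dset :: "nat \<Rightarrow> nat \<Rightarrow> nat \<Rightarrow> (nat \<Rightarrow> gf2) set" where
  "Dset \<nu> \<delta> k = {u. \<forall>i. u i \<noteq> 0 \<longrightarrow> (i < k \<or> (\<nu> \<le> i \<and> i < \<nu> + k) \<or> (2*\<nu> \<le> i \<and> i < 2*\<nu> + \<delta>))}"

lemma aniso_zero: "\<delta> \<le> 2 \<Longrightarrow> aniso \<delta> z w = 0 \<Longrightarrow> (\<delta> \<ge> 1 \<longrightarrow> z = 0) \<and> (\<delta> \<ge> 2 \<longrightarrow> w = 0)"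
  unfolding aniso_def using gf2_cases[of z] gf2_cases[of w]
  by (cases "\<delta> = 0"; cases "\<delta> = 1"; auto simp: gf2_two)

lemma ts_bound:
  assumes "k \<le> \<nu>" "\<delta> \<le> 2" "W \<subseteq> Dset \<nu> \<delta> k" "finite W"
    "\<forall>x\<in>W. \<forall>y\<in>W. vadd x y \<in> W" "\<forall>w\<in>W. Qf \<nu> \<delta> w = 0"
  shows "card W \<le> 2^k"
  using assms
proof (induction k arbitrary: W)
  case 0
  have "W \<subseteq> {\<lambda>i. 0}"
  proof
    fix w assume w: "w \<in> W"
    have wD: "w \<in> Dset \<nu> \<delta> 0" using w 0(3) by auto
    have sup: "w i \<noteq> 0 \<Longrightarrow> 2*\<nu> \<le> i \<and> i < 2*\<nu> + \<delta>" for i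
      using wD unfolding Dset_def by auto
    have "dotp \<nu> w (\<lambda>i. w (\<nu> + i)) = 0" unfolding dotp_def
      by (rule sum.neutral) (use sup in fastforce)
    moreover have "Qf \<nu> \<delta> w = 0" using 0(6) w by blast
    ultimately have "aniso \<delta> (w (2*\<nu>)) (w (2*\<nu>+1)) = 0" unfolding Qf_def by simp
    from aniso_zero[OF 0(2) this] have az: "\<delta> \<ge> 1 \<longrightarrow> w (2*\<nu>) = 0" "\<delta> \<ge> 2 \<longrightarrow> w (2*\<nu>+1) = 0"
      by auto
    have "w i = 0" for i
    proof (rule ccontr)
      assume wi: "w i \<noteq> 0"
      then have r: "2*\<nu> \<le> i" "i < 2*\<nu> + \<delta>" using sup by auto
      then have "i = 2*\<nu> \<and> \<delta> \<ge> 1 \<or> i = 2*\<nu>+1 \<and> \<delta> \<ge> 2" using 0(2) by linarith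
      then show False using az wi by auto
    qed
    then show "w \<in> {\<lambda>i. 0}" by auto
  qed
  then have "card W \<le> card {\<lambda>i::nat. 0::gf2}" by (intro card_mono) auto
  then show ?case by simp
next
  case (Suc k)
  define p where "p = k"
  have pn: "p < \<nu>" using Suc.prems(1) unfolding p_def by simp
  define W1 where "W1 = {w\<in>W. w (\<nu>+p) = 0}"
  define pr where "pr = (\<lambda>w::nat\<Rightarrow>gf2. w(p := 0))"
  define W' where "W' = pr ` W1"
  have fW1: "finite W1" unfolding W1_def using Suc.prems(4) by simp
  have W'D: "W' \<subseteq> Dset \<nu> \<delta> k"
  proof
    fix x assume "x \<in> W'"
    then obtain w where w: "w \<in> W" "w (\<nu>+p) = 0" "x = pr w" unfolding W'_def W1_def by auto
    have "w \<in> Dset \<nu> \<delta> (Suc k)" using w Suc.prems(3) by auto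
    then show "x \<in> Dset \<nu> \<delta> k" unfolding Dset_def w(3) pr_def p_def using w(2)[unfolded p_def]
      by (auto simp: less_Suc_eq)
  qed
  have W'closed: "\<forall>x\<in>W'. \<forall>y\<in>W'. vadd x y \<in> W'"
  proof (intro ballI)
    fix x y assume "x \<in> W'" "y \<in> W'"
    then obtain a b where ab: "a \<in> W1" "b \<in> W1" "x = pr a" "y = pr b" unfolding W'_def by auto
    have "vadd a b \<in> W1" using ab Suc.prems(5) unfolding W1_def vadd_def by auto
    moreover have "vadd x y = pr (vadd a b)" unfolding ab pr_def vadd_def by auto
    ultimately show "vadd x y \<in> W'" unfolding W'_def by auto
  qed
  have Qpr: "Qf \<nu> \<delta> (pr w) = Qf \<nu> \<delta> w" if "w (\<nu>+p) = 0" for w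
  proof -
    have "dotp \<nu> (pr w) (\<lambda>i. pr w (\<nu> + i)) = dotp \<nu> w (\<lambda>i. w (\<nu> + i))"
      unfolding dotp_def pr_def by (rule sum.cong) (use that pn in auto)
    moreover have "pr w (2*\<nu>) = w (2*\<nu>)" "pr w (2*\<nu>+1) = w (2*\<nu>+1)" unfolding pr_def using pn by auto
    ultimately show ?thesis unfolding Qf_def by simp
  qed
  have W'Q: "\<forall>w\<in>W'. Qf \<nu> \<delta> w = 0" unfolding W'_def W1_def using Qpr Suc.prems(6) by auto
  have IH: "card W' \<le> 2^k"
    using Suc.IH[of W'] Suc.prems(1,2) W'D W'closed W'Q fW1 W'_def by simp
  have Bz: "Bf \<nu> \<delta> x y = 0" if "x \<in> W" "y \<in> W" for x y
    using polar[of \<nu> \<delta> x y] Suc.prems(5,6) that by simp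
  show ?case
  proof (cases "\<exists>w0\<in>W. w0 (\<nu>+p) \<noteq> 0")
    case True
    then obtain w0 where w0: "w0 \<in> W" "w0 (\<nu>+p) \<noteq> 0" by auto
    have "W \<subseteq> W1 \<union> (\<lambda>w. vadd w w0) ` W1"
    proof
      fix w assume w: "w \<in> W"
      show "w \<in> W1 \<union> (\<lambda>w. vadd w w0) ` W1"
      proof (cases "w (\<nu>+p) = 0")
        case True then show ?thesis using w unfolding W1_def by auto
      next
        case False
        have "vadd w w0 \<in> W1" using w w0 Suc.prems(5) False gf2_neq0 unfolding W1_def vadd_def by auto
        moreover have "w = vadd (vadd w w0) w0" by (simp add: vadd_cancel)
        ultimately show ?thesis by blast
      qed
    qed
    then have "card W \<le> card (W1 \<union> (\<lambda>w. vadd w w0) ` W1)"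
      by (intro card_mono) (use fW1 in auto)
    also have "\<dots> \<le> card W1 + card ((\<lambda>w. vadd w w0) ` W1)" by (rule card_Un_le)
    also have "\<dots> \<le> card W1 + card W1" using card_image_le[OF fW1] by simp
    finally have cW: "card W \<le> 2 * card W1" by simp
    have "inj_on pr W1"
    proof (rule inj_onI)
      fix x y assume x: "x \<in> W1" and y: "y \<in> W1" and e: "pr x = pr y"
      show "x = y"
      proof (rule ccontr)
        assume ne: "x \<noteq> y"
        have "x i = y i" if "i \<noteq> p" for i using fun_cong[OF e, of i] that unfolding pr_def by simp
        then have xp: "x p \<noteq> y p" using ne by (metis ext)
        define d where "d = vadd x y"
        have dW: "d \<in> W" unfolding d_def using x y Suc.prems(5) unfolding W1_def by auto
        have "d = (\<lambda>i. if i = p then 1 else 0)"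
        proof
          fix i show "d i = (if i = p then 1 else 0)"
            using \<open>\<And>i. i \<noteq> p \<Longrightarrow> x i = y i\<close> xp gf2_cases[of "x p"] gf2_cases[of "y p"]
            unfolding d_def vadd_def by (cases "i = p") (auto simp: gf2_two)
        qed
        then have dd: "d = (\<lambda>i. if i = p then 1 else 0)" .
        have s1: "(\<Sum>i<\<nu>. d i * w0 (\<nu> + i)) = (\<Sum>i<\<nu>. if i = p then w0 (\<nu> + i) else 0)"
          by (rule sum.cong) (auto simp: dd)
        have s2: "(\<Sum>i<\<nu>. d (\<nu> + i) * w0 i) = 0"
          by (rule sum.neutral) (use pn in \<open>auto simp: dd\<close>)
        have s3: "d (2*\<nu>) = 0" "d (2*\<nu>+1) = 0" using pn by (auto simp: dd)
        have "Bf \<nu> \<delta> d w0 = w0 (\<nu>+p)" unfolding Bf_def dotp_def s1 s2 s3 using pn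
          by (simp add: sum.delta)
        then show False using Bz[OF dW w0(1)] w0(2) by simp
      qed
    qed
    then have "card W1 = card W'" unfolding W'_def by (simp add: card_image)
    then show ?thesis using cW IH by simp
  next
    case False
    then have WW1: "W = W1" unfolding W1_def by auto
    have "W1 \<subseteq> W' \<union> (\<lambda>w. w(p := 1)) ` W'"
    proof
      fix w assume w: "w \<in> W1"
      show "w \<in> W' \<union> (\<lambda>w. w(p := 1)) ` W'"
      proof (cases "w p = 0")
        case True
        then have "w = pr w" unfolding pr_def by auto
        then show ?thesis using w unfolding W'_def by blast
      next
        case False
        then have wp: "w p = 1" using gf2_neq0 by simp
        have "(pr w)(p := 1) = w" unfolding pr_def fun_upd_upd using wp by (rule fun_upd_idem)
        then have "w = (pr w)(p := 1)" by simp
        then show ?thesis using w unfolding W'_def by blast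
      qed
    qed
    then have "card W1 \<le> card (W' \<union> (\<lambda>w. w(p := 1)) ` W')"
      by (intro card_mono) (use fW1 W'_def in auto)
    also have "\<dots> \<le> card W' + card ((\<lambda>w. w(p := 1)) ` W')" by (rule card_Un_le)
    also have "\<dots> \<le> card W' + card W'"
    proof -
      have "finite W'" unfolding W'_def using fW1 by simp
      then show ?thesis using card_image_le[of W' "\<lambda>w. w(p := 1)"] by simp
    qed
    finally show ?thesis using WW1 IH by simp
  qed
qed


inductive_set spn :: "(nat \<Rightarrow> gf2) set \<Rightarrow> (nat \<Rightarrow> gf2) set" for I where
  spn0: "(\<lambda>i. 0) \<in> spn I"
| spnS: "v \<in> I \<Longrightarrow> w \<in> spn I \<Longrightarrow> vadd v w \<in> spn I"

lemma Fn_zero: "(\<lambda>i. 0) \<in> Fn m"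
  unfolding Fn_def by simp

lemma vadd_assoc: "vadd (vadd u v) w = vadd u (vadd v w)"
  unfolding vadd_def by (simp add: add.assoc)

lemma vadd_zero_left: "vadd (\<lambda>i. 0) u = u"
  unfolding vadd_def by simp

lemma spn_add: "x \<in> spn I \<Longrightarrow> y \<in> spn I \<Longrightarrow> vadd x y \<in> spn I"
proof (induction x rule: spn.induct)
  case spn0 then show ?case by (simp add: vadd_zero_left)
next
  case (spnS v w) then show ?case by (simp add: vadd_assoc spn.spnS)
qed

lemma spn_Fn:
  assumes "I \<subseteq> Fn m"
  shows "w \<in> spn I \<Longrightarrow> w \<in> Fn m"
proof (induction w rule: spn.induct)
  case spn0 then show ?case by (rule Fn_zero)
next
  case (spnS v w) then show ?case using assms vadd_Fn by blast
qed

lemma spn_orth: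
  assumes "\<forall>u\<in>I. \<forall>v\<in>I. Bf \<nu> \<delta> u v = 0" "u \<in> I"
  shows "w \<in> spn I \<Longrightarrow> Bf \<nu> \<delta> u w = 0"
proof (induction w rule: spn.induct)
  case spn0 then show ?case unfolding Bf_def dotp_def by simp
next
  case (spnS v w) then show ?case using assms by (simp add: Bf_add)
qed

lemma spn_Q:
  assumes "\<forall>u\<in>I. \<forall>v\<in>I. Bf \<nu> \<delta> u v = 0" "\<forall>u\<in>I. Qf \<nu> \<delta> u = 0"
  shows "w \<in> spn I \<Longrightarrow> Qf \<nu> \<delta> w = 0"
proof (induction w rule: spn.induct)
  case spn0 then show ?case unfolding Qf_def dotp_def aniso_def by simp
next
  case (spnS v w) then show ?case using assms spn_orth[OF assms(1) spnS(1) spnS(2)] by (simp add: polar)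
qed

lemma Fn_Dset: "Fn (2*\<nu>+\<delta>) \<subseteq> Dset \<nu> \<delta> \<nu>"
  unfolding Fn_def Dset_def by (auto simp: not_le[symmetric])

lemma indep_bound:
  assumes d: "\<delta> \<le> 2" and I: "I \<subseteq> Sset \<nu> \<delta>" and orth: "\<forall>u\<in>I. \<forall>v\<in>I. Bf \<nu> \<delta> u v = 0"
  shows "card I \<le> 2^\<nu> - 1"
proof -
  have IF: "I \<subseteq> Fn (2*\<nu>+\<delta>)" using I unfolding Sset_def by auto
  have IQ: "\<forall>u\<in>I. Qf \<nu> \<delta> u = 0" using I unfolding Sset_def by auto
  have WF: "spn I \<subseteq> Fn (2*\<nu>+\<delta>)" using spn_Fn[OF IF] by auto
  have fW: "finite (spn I)" using WF Fn_finite finite_subset by blast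
  have "card (spn I) \<le> 2^\<nu>"
  proof (rule ts_bound[OF le_refl d])
    show "spn I \<subseteq> Dset \<nu> \<delta> \<nu>" using WF Fn_Dset by blast
    show "finite (spn I)" by (rule fW)
    show "\<forall>x\<in>spn I. \<forall>y\<in>spn I. vadd x y \<in> spn I" using spn_add by blast
    show "\<forall>w\<in>spn I. Qf \<nu> \<delta> w = 0" using spn_Q[OF orth IQ] by blast
  qed
  moreover have "I \<subseteq> spn I - {\<lambda>i. 0}"
  proof
    fix v assume v: "v \<in> I"
    have "vadd v (\<lambda>i. 0) = v" unfolding vadd_def by simp
    then have "v \<in> spn I" using spn.spnS[OF v spn.spn0] by simp
    moreover have "v \<noteq> (\<lambda>i. 0)" using v I unfolding Sset_def by auto
    ultimately show "v \<in> spn I - {\<lambda>i. 0}" by simp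
  qed
  then have "card I \<le> card (spn I - {\<lambda>i. 0})" using fW by (intro card_mono) auto
  moreover have "card (spn I - {\<lambda>i. 0}) = card (spn I) - 1" using fW spn.spn0 by simp
  ultimately show ?thesis by simp
qed

subsection \<open>Counting singular vectors\<close>

lemma half_card1:
  fixes l :: "(nat \<Rightarrow> gf2) \<Rightarrow> gf2"
  assumes add: "\<And>x y. x \<in> Fn m \<Longrightarrow> y \<in> Fn m \<Longrightarrow> l (vadd x y) = l x + l y"
    and x0: "x0 \<in> Fn m" "l x0 \<noteq> 0" and m: "m \<ge> 1"
  shows "card {x\<in>Fn m. l x = 1} = 2^m div 2"
proof -
  have c0: "card {x\<in>Fn m. l x = 0} = 2^m div 2" by (rule half_card[OF add x0])
  have "{x\<in>Fn m. l x = 0} \<union> {x\<in>Fn m. l x = 1} = Fn m" using gf2_cases by auto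
  moreover have "{x\<in>Fn m. l x = 0} \<inter> {x\<in>Fn m. l x = 1} = {}" by auto
  ultimately have "card {x\<in>Fn m. l x = 0} + card {x\<in>Fn m. l x = 1} = 2^m"
    using Fn_card Fn_finite card_Un_disjoint
    by (metis (no_types, lifting) finite_Un)
  moreover have "(2::nat)^m div 2 * 2 = 2^m" using m by (cases m) auto
  ultimately show ?thesis using c0 by linarith
qed

lemma dot_fiber:
  assumes X: "X \<in> Fn \<nu>" "X \<noteq> (\<lambda>i. 0)" and c: "c = 0 \<or> c = 1"
  shows "card {Y\<in>Fn \<nu>. dotp \<nu> X Y = c} = 2^\<nu> div 2"
proof -
  obtain j where j: "X j \<noteq> 0" using X(2) by auto
  have jk: "j < \<nu>"
  proof (rule ccontr)
    assume "\<not> j < \<nu>"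
    then have "X j = 0" using X(1) unfolding Fn_def by auto
    then show False using j by simp
  qed
  define e where "e = (\<lambda>i. if i = j then (1::gf2) else 0)"
  have eF: "e \<in> Fn \<nu>" unfolding e_def Fn_def using jk by auto
  have "dotp \<nu> X e = (\<Sum>i<\<nu>. if i = j then X j else 0)"
    unfolding dotp_def by (rule sum.cong) (auto simp: e_def)
  also have "\<dots> = X j" using jk by (simp add: sum.delta)
  finally have de: "dotp \<nu> X e \<noteq> 0" using j by simp
  have add: "\<And>x y. x \<in> Fn \<nu> \<Longrightarrow> y \<in> Fn \<nu> \<Longrightarrow> dotp \<nu> X (vadd x y) = dotp \<nu> X x + dotp \<nu> X y"
    by (rule dotp_vadd_right)
  have "\<nu> \<ge> 1" using jk by simp
  then show ?thesis using c half_card[OF add eF de] half_card1[OF add eF de] by auto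
qed

definition Zset :: "nat \<Rightarrow> gf2 \<Rightarrow> ((nat \<Rightarrow> gf2) \<times> (nat \<Rightarrow> gf2)) set" where
  "Zset \<nu> c = {p \<in> Fn \<nu> \<times> Fn \<nu>. dotp \<nu> (fst p) (snd p) = c}"

lemma Zset_finite: "finite (Zset \<nu> c)"
  unfolding Zset_def using Fn_finite by simp

lemma Zset_card:
  assumes "\<nu> \<ge> 1" "c = 0 \<or> c = 1"
  shows "card (Zset \<nu> c) = (if c = 0 then 2^\<nu> else 0) + (2^\<nu> - 1) * (2^\<nu> div 2)"
proof -
  define B where "B X = {Y\<in>Fn \<nu>. dotp \<nu> X Y = c}" for X
  have "Zset \<nu> c = Sigma (Fn \<nu>) B" unfolding Zset_def B_def by auto
  then have "card (Zset \<nu> c) = (\<Sum>X\<in>Fn \<nu>. card (B X))"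
    using card_SigmaI[of "Fn \<nu>" B] Fn_finite unfolding B_def by simp
  also have "\<dots> = card (B (\<lambda>i. 0)) + (\<Sum>X\<in>Fn \<nu> - {\<lambda>i. 0}. card (B X))"
    using sum.remove[OF Fn_finite, of "\<lambda>i. 0"] Fn_def by (simp add: Fn_def)
  also have "(\<Sum>X\<in>Fn \<nu> - {\<lambda>i. 0}. card (B X)) = (\<Sum>X\<in>Fn \<nu> - {\<lambda>i. 0}. 2^\<nu> div 2)"
    by (rule sum.cong) (auto simp: B_def intro!: dot_fiber assms(2))
  also have "\<dots> = (2^\<nu> - 1) * (2^\<nu> div 2)"
    using Fn_card[of \<nu>] Fn_finite by (simp add: Fn_def card_Diff_singleton)
  also have "card (B (\<lambda>i. 0)) = (if c = 0 then 2^\<nu> else 0)"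
    unfolding B_def dotp_def using Fn_card by auto
  finally show ?thesis .
qed

definition J :: "nat \<Rightarrow> (nat \<Rightarrow> gf2) \<Rightarrow> (nat \<Rightarrow> gf2) \<Rightarrow> gf2 \<Rightarrow> gf2 \<Rightarrow> nat \<Rightarrow> gf2" where
  "J \<nu> X Y z w = (\<lambda>i. if i < \<nu> then X i else if i < 2*\<nu> then Y (i - \<nu>)
      else if i = 2*\<nu> then z else if i = 2*\<nu>+1 then w else 0)"

lemma J_Qf: "Qf \<nu> \<delta> (J \<nu> X Y z w) = dotp \<nu> X Y + aniso \<delta> z w"
proof -
  have "dotp \<nu> (J \<nu> X Y z w) (\<lambda>i. J \<nu> X Y z w (\<nu> + i)) = dotp \<nu> X Y"
    unfolding dotp_def by (rule sum.cong) (auto simp: J_def)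
  moreover have "J \<nu> X Y z w (2*\<nu>) = z" "J \<nu> X Y z w (2*\<nu>+1) = w" by (auto simp: J_def)
  ultimately show ?thesis unfolding Qf_def by simp
qed

lemma J_inj:
  assumes "X \<in> Fn \<nu>" "Y \<in> Fn \<nu>" "X' \<in> Fn \<nu>" "Y' \<in> Fn \<nu>" "J \<nu> X Y z w = J \<nu> X' Y' z' w'"
  shows "X = X' \<and> Y = Y' \<and> z = z' \<and> w = w'"
proof (intro conjI)
  note e = fun_cong[OF assms(5)]
  show "X = X'"
  proof
    fix i show "X i = X' i"
      using e[of i] assms(1,3) unfolding J_def Fn_def by (cases "i < \<nu>") auto
  qed
  show "Y = Y'"
  proof
    fix i show "Y i = Y' i"
      using e[of "\<nu>+i"] assms(2,4) unfolding J_def Fn_def by (cases "i < \<nu>") auto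
  qed
  show "z = z'" using e[of "2*\<nu>"] unfolding J_def by simp
  show "w = w'" using e[of "2*\<nu>+1"] unfolding J_def by simp
qed

lemma J_Fn:
  assumes "X \<in> Fn \<nu>" "Y \<in> Fn \<nu>" "\<delta> = 0 \<longrightarrow> z = 0" "\<delta> \<le> 1 \<longrightarrow> w = 0" "\<delta> \<le> 2"
  shows "J \<nu> X Y z w \<in> Fn (2*\<nu>+\<delta>)"
  using assms unfolding Fn_def J_def by auto

lemma J_zero: "J \<nu> (\<lambda>i. 0) (\<lambda>i. 0) 0 0 = (\<lambda>i. 0)"
  unfolding J_def by auto

lemma lb_helper:
  assumes T: "T \<subseteq> Fn \<nu> \<times> Fn \<nu> \<times> UNIV \<times> UNIV" "finite T"
    and good: "\<And>X Y z w. (X, Y, z, w) \<in> T \<Longrightarrow> J \<nu> X Y z w \<in> Fn (2*\<nu>+\<delta>) \<and> Qf \<nu> \<delta> (J \<nu> X Y z w) = 0"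
  shows "card T \<le> card (Sset \<nu> \<delta>) + 1"
proof -
  define F where "F = (\<lambda>(X, Y, z, w). J \<nu> X Y z w)"
  have "inj_on F T"
  proof (rule inj_onI)
    fix p q assume p: "p \<in> T" and q: "q \<in> T" and e: "F p = F q"
    obtain X Y z w where pp: "p = (X, Y, z, w)" by (cases p) auto
    obtain X' Y' z' w' where qq: "q = (X', Y', z', w')" by (cases q) auto
    show "p = q" using J_inj[of X \<nu> Y X' Y' z w z' w'] p q T(1) e unfolding pp qq F_def by auto
  qed
  moreover have "F ` T \<subseteq> Sset \<nu> \<delta> \<union> {\<lambda>i. 0}"
  proof
    fix v assume "v \<in> F ` T"
    then obtain X Y z w where t: "(X, Y, z, w) \<in> T" "v = J \<nu> X Y z w" unfolding F_def by auto
    then show "v \<in> Sset \<nu> \<delta> \<union> {\<lambda>i. 0}" using good[OF t(1)] unfolding Sset_def by auto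
  qed
  ultimately have "card T \<le> card (Sset \<nu> \<delta> \<union> {\<lambda>i. 0})"
    using card_inj_on_le Sset_finite by (metis finite_insert insert_is_Un sup_commute)
  also have "\<dots> \<le> card (Sset \<nu> \<delta>) + 1" using card_Un_le[of "Sset \<nu> \<delta>" "{\<lambda>i. 0}"] by simp
  finally show ?thesis .
qed

definition gz :: "gf2 \<Rightarrow> gf2 \<Rightarrow> (nat \<Rightarrow> gf2) \<times> (nat \<Rightarrow> gf2) \<Rightarrow> (nat \<Rightarrow> gf2) \<times> (nat \<Rightarrow> gf2) \<times> gf2 \<times> gf2" where
  "gz z w p = (fst p, snd p, z, w)"

lemma gz_inj: "inj_on (gz z w) A"
  unfolding gz_def by (rule inj_onI) (auto simp: prod_eq_iff)

lemma pow_facts: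
  assumes "\<nu> \<ge> 1"
  obtains g where "(2::nat)^\<nu> = 2*g + 2" "(2::nat)^(\<nu>-1) = g + 1" "(2::nat)^\<nu> div 2 = g + 1"
    "(2::nat)^(\<nu>+1) = 4*g + 4" "(2::nat)^\<nu> - 1 = 2*g + 1"
proof -
  obtain j where j: "\<nu> = Suc j" using assms by (cases \<nu>) auto
  define g where "g = (2::nat)^j - 1"
  have "(2::nat)^j \<ge> 1" by simp
  then have gj: "(2::nat)^j = g + 1" unfolding g_def by simp
  show ?thesis by (rule that[of g]) (simp_all add: j gj)
qed

lemma card_S_lb:
  assumes d: "\<delta> \<le> 2" and n: "\<nu> \<ge> 1"
  shows "(2^(\<nu>+\<delta>-1) + 1) * (2^\<nu> - 1) \<le> card (Sset \<nu> \<delta>)"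
proof -
  obtain g where g: "(2::nat)^\<nu> = 2*g + 2" "(2::nat)^(\<nu>-1) = g + 1" "(2::nat)^\<nu> div 2 = g + 1"
    "(2::nat)^(\<nu>+1) = 4*g + 4" "(2::nat)^\<nu> - 1 = 2*g + 1" using pow_facts[OF n] by blast
  have Z0: "card (Zset \<nu> 0) = (2*g+2) + (2*g+1)*(g+1)" using Zset_card[OF n, of 0] g by simp
  have Z1: "card (Zset \<nu> 1) = (2*g+1)*(g+1)" using Zset_card[OF n, of 1] g by simp
  have ZF: "X \<in> Fn \<nu> \<and> Y \<in> Fn \<nu>" if "(X, Y) \<in> Zset \<nu> c" for X Y c
    using that unfolding Zset_def by auto
  have ZD: "dotp \<nu> X Y = c" if "(X, Y) \<in> Zset \<nu> c" for X Y c using that unfolding Zset_def by auto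
  consider "\<delta> = 0" | "\<delta> = 1" | "\<delta> = 2" using d by linarith
  then show ?thesis
  proof cases
    case 1
    define T where "T = gz 0 0 ` Zset \<nu> 0"
    have "card T \<le> card (Sset \<nu> \<delta>) + 1"
    proof (rule lb_helper)
      show "T \<subseteq> Fn \<nu> \<times> Fn \<nu> \<times> UNIV \<times> UNIV" unfolding T_def gz_def using ZF by auto
      show "finite T" unfolding T_def using Zset_finite by simp
      fix X Y z w assume "(X, Y, z, w) \<in> T"
      then have "(X, Y) \<in> Zset \<nu> 0" "z = 0" "w = 0" unfolding T_def gz_def by auto
      then show "J \<nu> X Y z w \<in> Fn (2*\<nu>+\<delta>) \<and> Qf \<nu> \<delta> (J \<nu> X Y z w) = 0"
        using J_Fn[of X \<nu> Y \<delta> z w] ZF ZD 1 by (auto simp: J_Qf aniso_def)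
    qed
    moreover have "card T = card (Zset \<nu> 0)" unfolding T_def by (rule card_image[OF gz_inj])
    ultimately show ?thesis using 1 g Z0 by (simp add: algebra_simps)
  next
    case 2
    define T where "T = (\<lambda>p. (fst p, snd p, dotp \<nu> (fst p) (snd p), 0::gf2)) ` (Fn \<nu> \<times> Fn \<nu>)"
    have "card T \<le> card (Sset \<nu> \<delta>) + 1"
    proof (rule lb_helper)
      show "T \<subseteq> Fn \<nu> \<times> Fn \<nu> \<times> UNIV \<times> UNIV" unfolding T_def by auto
      show "finite T" unfolding T_def using Fn_finite by simp
      fix X Y z w assume "(X, Y, z, w) \<in> T"
      then have "X \<in> Fn \<nu>" "Y \<in> Fn \<nu>" "z = dotp \<nu> X Y" "w = 0" unfolding T_def by auto
      then show "J \<nu> X Y z w \<in> Fn (2*\<nu>+\<delta>) \<and> Qf \<nu> \<delta> (J \<nu> X Y z w) = 0"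
        using J_Fn[of X \<nu> Y \<delta> z w] 2 by (auto simp: J_Qf aniso_def)
    qed
    moreover have "card T = card (Fn \<nu> \<times> Fn \<nu>)" unfolding T_def
      by (rule card_image) (auto intro!: inj_onI)
    moreover have "card (Fn \<nu> \<times> Fn \<nu>) = (2*g+2)*(2*g+2)" using Fn_card g by (simp add: card_cartesian_product)
    ultimately show ?thesis using 2 g by (simp add: algebra_simps)
  next
    case 3
    define T where "T = gz 0 0 ` Zset \<nu> 0 \<union> gz 1 0 ` Zset \<nu> 1 \<union> gz 0 1 ` Zset \<nu> 1 \<union> gz 1 1 ` Zset \<nu> 1"
    have "card T \<le> card (Sset \<nu> \<delta>) + 1"
    proof (rule lb_helper)
      show "T \<subseteq> Fn \<nu> \<times> Fn \<nu> \<times> UNIV \<times> UNIV" unfolding T_def gz_def using ZF by auto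
      show "finite T" unfolding T_def using Zset_finite by simp
      fix X Y z w assume t: "(X, Y, z, w) \<in> T"
      then have XY: "X \<in> Fn \<nu>" "Y \<in> Fn \<nu>" unfolding T_def gz_def using ZF by auto
      have "Qf \<nu> \<delta> (J \<nu> X Y z w) = 0"
        using t ZD 3 unfolding T_def gz_def by (auto simp: J_Qf aniso_def gf2_two)
      then show "J \<nu> X Y z w \<in> Fn (2*\<nu>+\<delta>) \<and> Qf \<nu> \<delta> (J \<nu> X Y z w) = 0"
        using J_Fn[OF XY, of \<delta> z w] 3 by auto
    qed
    moreover have "card T = card (Zset \<nu> 0) + 3 * card (Zset \<nu> 1)"
    proof -
      have f: "finite (gz z w ` Zset \<nu> c)" for z w c using Zset_finite by simp
      have c: "card (gz z w ` Zset \<nu> c) = card (Zset \<nu> c)" for z w c by (rule card_image[OF gz_inj])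
      have dj: "gz z w ` A \<inter> gz z' w' ` B = {}" if "(z, w) \<noteq> (z', w')" for z w z' w' A B
        using that unfolding gz_def by auto
      have e1: "card (gz 0 0 ` Zset \<nu> 0 \<union> gz 1 0 ` Zset \<nu> 1) = card (Zset \<nu> 0) + card (Zset \<nu> 1)"
        by (subst card_Un_disjoint) (auto simp: f c dj)
      have e2: "card (gz 0 0 ` Zset \<nu> 0 \<union> gz 1 0 ` Zset \<nu> 1 \<union> gz 0 1 ` Zset \<nu> 1)
          = card (Zset \<nu> 0) + 2 * card (Zset \<nu> 1)"
        by (subst card_Un_disjoint) (auto simp: f c dj e1 Int_Un_distrib2)
      show ?thesis unfolding T_def
        by (subst card_Un_disjoint) (auto simp: f c dj e2 Int_Un_distrib2)
    qed
    ultimately show ?thesis using 3 g Z0 Z1 by (simp add: algebra_simps)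
  qed
qed


definition xp :: "nat \<Rightarrow> (nat \<Rightarrow> gf2) \<Rightarrow> nat \<Rightarrow> gf2" where
  "xp \<nu> u = (\<lambda>i. if i < \<nu> then u i else 0)"
definition yp :: "nat \<Rightarrow> (nat \<Rightarrow> gf2) \<Rightarrow> nat \<Rightarrow> gf2" where
  "yp \<nu> u = (\<lambda>i. if i < \<nu> then u (\<nu> + i) else 0)"

lemma xp_Fn: "xp \<nu> u \<in> Fn \<nu>" unfolding xp_def Fn_def by auto
lemma yp_Fn: "yp \<nu> u \<in> Fn \<nu>" unfolding yp_def Fn_def by auto

lemma Bf_xy: "\<delta> \<noteq> 2 \<Longrightarrow> Bf \<nu> \<delta> u v = dotp \<nu> (xp \<nu> u) (yp \<nu> v) + dotp \<nu> (yp \<nu> u) (xp \<nu> v)"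
  unfolding Bf_def dotp_def xp_def yp_def by simp

lemma Qf_xy0: "Qf \<nu> 0 u = dotp \<nu> (xp \<nu> u) (yp \<nu> u)"
  unfolding Qf_def aniso_def dotp_def xp_def yp_def by simp

lemma dotp_zero_left: "dotp k (\<lambda>i. 0) y = 0" unfolding dotp_def by simp
lemma dotp_zero_right: "dotp k x (\<lambda>i. 0) = 0" unfolding dotp_def by simp

lemma colour_gen:
  fixes M :: "'a \<Rightarrow> (nat \<Rightarrow> gf2) \<Rightarrow> (nat \<Rightarrow> gf2)" and B :: "(nat \<Rightarrow> gf2) \<Rightarrow> (nat \<Rightarrow> gf2) \<Rightarrow> gf2"
  assumes fA: "finite A"
    and sym: "\<And>a X Y. a \<in> A \<Longrightarrow> X \<in> Fn \<nu> \<Longrightarrow> Y \<in> Fn \<nu> \<Longrightarrow> dotp \<nu> X (M a Y) = dotp \<nu> Y (M a X)"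
    and cover: "\<And>u. u \<in> S \<Longrightarrow> xp \<nu> u \<noteq> (\<lambda>i. 0) \<Longrightarrow> \<exists>a\<in>A. M a (xp \<nu> u) = yp \<nu> u"
    and B: "\<And>u v. u \<in> S \<Longrightarrow> v \<in> S \<Longrightarrow> B u v = dotp \<nu> (xp \<nu> u) (yp \<nu> v) + dotp \<nu> (yp \<nu> u) (xp \<nu> v)"
  shows "\<exists>col. (\<forall>u\<in>S. col u < card A + 1) \<and> (\<forall>u\<in>S. \<forall>v\<in>S. col u = col v \<longrightarrow> B u v = 0)"
proof -
  obtain h where h: "bij_betw h A {0..<card A}" using ex_bij_betw_finite_nat[OF fA] by blast
  define sel where "sel u = (SOME a. a \<in> A \<and> M a (xp \<nu> u) = yp \<nu> u)" for u
  have sel: "sel u \<in> A \<and> M (sel u) (xp \<nu> u) = yp \<nu> u" if us: "u \<in> S" "xp \<nu> u \<noteq> (\<lambda>i. 0)" for u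
  proof -
    obtain a where "a \<in> A \<and> M a (xp \<nu> u) = yp \<nu> u" using cover[OF us] by blast
    then show ?thesis unfolding sel_def by (rule someI)
  qed
  define col where "col u = (if xp \<nu> u = (\<lambda>i. 0) then 0 else Suc (h (sel u)))" for u
  have "\<forall>u\<in>S. col u < card A + 1"
  proof
    fix u assume u: "u \<in> S"
    show "col u < card A + 1"
    proof (cases "xp \<nu> u = (\<lambda>i. 0)")
      case True then show ?thesis unfolding col_def by simp
    next
      case False
      then have "h (sel u) \<in> {0..<card A}" using sel[OF u False] h bij_betwE by blast
      then show ?thesis unfolding col_def using False by simp
    qed
  qed
  moreover have "\<forall>u\<in>S. \<forall>v\<in>S. col u = col v \<longrightarrow> B u v = 0"
  proof (intro ballI impI)
    fix u v assume u: "u \<in> S" and v: "v \<in> S" and e: "col u = col v"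
    show "B u v = 0"
    proof (cases "xp \<nu> u = (\<lambda>i. 0)")
      case True
      then have "xp \<nu> v = (\<lambda>i. 0)" using e unfolding col_def by (auto split: if_splits)
      then show ?thesis using True B[OF u v] by (simp add: dotp_zero_left dotp_zero_right)
    next
      case False
      then have Fv: "xp \<nu> v \<noteq> (\<lambda>i. 0)" using e unfolding col_def by (auto split: if_splits)
      then have "h (sel u) = h (sel v)" using e False unfolding col_def by simp
      then have ab: "sel u = sel v" using sel[OF u False] sel[OF v Fv] h unfolding bij_betw_def inj_on_def by blast
      define a where "a = sel u"
      have aA: "a \<in> A" using sel[OF u False] unfolding a_def by simp
      have yu: "yp \<nu> u = M a (xp \<nu> u)" using sel[OF u False] unfolding a_def by simp
      have yv: "yp \<nu> v = M a (xp \<nu> v)" using sel[OF v Fv] ab unfolding a_def by simp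
      have "B u v = dotp \<nu> (xp \<nu> u) (M a (xp \<nu> v)) + dotp \<nu> (xp \<nu> v) (M a (xp \<nu> u))"
        unfolding B[OF u v] yu yv by (simp add: dotp_comm)
      also have "\<dots> = 0" using sym[OF aA xp_Fn xp_Fn, of u v] by simp
      finally show ?thesis .
    qed
  qed
  ultimately show ?thesis by blast
qed

lemma colour_P:
  assumes n: "\<nu> \<ge> 1"
  shows "\<exists>col. (\<forall>u\<in>Sset \<nu> 1. col u < (2::nat)^\<nu> + 1) \<and> (\<forall>u\<in>Sset \<nu> 1. \<forall>v\<in>Sset \<nu> 1. col u = col v \<longrightarrow> Bf \<nu> 1 u v = 0)"
proof -
  have "\<exists>f::gf2 poly. irreducible f \<and> degree f = \<nu>" by (rule gf2_irr_exists[OF n])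
  then obtain f :: "gf2 poly" where f: "irreducible f \<and> degree f = \<nu>" ..
  interpret ffield f \<nu> by (unfold_locales) (use f in simp_all)
  have "\<exists>col. (\<forall>u\<in>Sset \<nu> 1. col u < card (Fn \<nu>) + 1) \<and> (\<forall>u\<in>Sset \<nu> 1. \<forall>v\<in>Sset \<nu> 1. col u = col v \<longrightarrow> Bf \<nu> 1 u v = 0)"
  proof (rule colour_gen[where M = AP])
    show "finite (Fn \<nu>)" by (rule Fn_finite)
    show "dotp \<nu> X (AP a Y) = dotp \<nu> Y (AP a X)" for a X Y by (rule AP_sym)
    show "\<exists>a\<in>Fn \<nu>. AP a (xp \<nu> u) = yp \<nu> u" if "u \<in> Sset \<nu> 1" "xp \<nu> u \<noteq> (\<lambda>i. 0)" for u
      by (rule AP_cover[OF xp_Fn that(2) yp_Fn])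
    show "Bf \<nu> 1 u v = dotp \<nu> (xp \<nu> u) (yp \<nu> v) + dotp \<nu> (yp \<nu> u) (xp \<nu> v)" for u v
      by (rule Bf_xy) simp
  qed
  then show ?thesis using Fn_card by simp
qed

lemma colour_H:
  assumes k: "odd k"
  shows "\<exists>col. (\<forall>u\<in>Sset (Suc k) 0. col u < (2::nat)^k + 1) \<and> (\<forall>u\<in>Sset (Suc k) 0. \<forall>v\<in>Sset (Suc k) 0. col u = col v \<longrightarrow> Bf (Suc k) 0 u v = 0)"
proof -
  have k1: "k \<ge> 1" using k by (cases k) auto
  have "\<exists>f::gf2 poly. irreducible f \<and> degree f = k" by (rule gf2_irr_exists[OF k1])
  then obtain f :: "gf2 poly" where f: "irreducible f \<and> degree f = k" ..
  interpret ffield f k by (unfold_locales) (use f in simp_all)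
  have "\<exists>col. (\<forall>u\<in>Sset (Suc k) 0. col u < card (Fn k) + 1) \<and> (\<forall>u\<in>Sset (Suc k) 0. \<forall>v\<in>Sset (Suc k) 0. col u = col v \<longrightarrow> Bf (Suc k) 0 u v = 0)"
  proof (rule colour_gen[where M = MH])
    show "finite (Fn k)" by (rule Fn_finite)
    show "dotp (Suc k) X (MH a Y) = dotp (Suc k) Y (MH a X)" for a X Y by (rule MH_sym[OF k])
    show "\<exists>a\<in>Fn k. MH a (xp (Suc k) u) = yp (Suc k) u" if "u \<in> Sset (Suc k) 0" "xp (Suc k) u \<noteq> (\<lambda>i. 0)" for u
    proof (rule MH_cover[OF k xp_Fn that(2) yp_Fn])
      show "dotp (Suc k) (xp (Suc k) u) (yp (Suc k) u) = 0" using that(1) unfolding Sset_def Qf_xy0 by simp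
    qed
    show "Bf (Suc k) 0 u v = dotp (Suc k) (xp (Suc k) u) (yp (Suc k) v) + dotp (Suc k) (yp (Suc k) u) (xp (Suc k) v)" for u v
      by (rule Bf_xy) simp
  qed
  then show ?thesis using Fn_card by simp
qed

definition phiE :: "nat \<Rightarrow> (nat \<Rightarrow> gf2) \<Rightarrow> nat \<Rightarrow> gf2" where
  "phiE \<nu> u = (\<lambda>i. if i < \<nu> then u i else if i = \<nu> then u (2*\<nu>) else if i < 2*\<nu>+1 then u (i - 1)
     else if i = 2*\<nu>+1 then u (2*\<nu>+1) else if i = 2*\<nu>+2 then u (2*\<nu>) + u (2*\<nu>+1) else 0)"

lemma phiE_Q: "Qf (Suc \<nu>) 1 (phiE \<nu> u) = Qf \<nu> 2 u"
proof -
  have "dotp (Suc \<nu>) (phiE \<nu> u) (\<lambda>i. phiE \<nu> u (Suc \<nu> + i)) = dotp \<nu> (phiE \<nu> u) (\<lambda>i. phiE \<nu> u (Suc \<nu> + i)) + u (2*\<nu>) * u (2*\<nu>+1)"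
    unfolding dotp_Suc by (simp add: phiE_def)
  moreover have "dotp \<nu> (phiE \<nu> u) (\<lambda>i. phiE \<nu> u (Suc \<nu> + i)) = dotp \<nu> u (\<lambda>i. u (\<nu> + i))"
    unfolding dotp_def by (rule sum.cong) (auto simp: phiE_def)
  moreover have "phiE \<nu> u (2 * Suc \<nu>) = u (2*\<nu>) + u (2*\<nu>+1)" by (simp add: phiE_def)
  ultimately show ?thesis unfolding Qf_def aniso_def by (simp add: algebra_simps gf2_two)
qed

lemma phiE_add: "phiE \<nu> (vadd u v) = vadd (phiE \<nu> u) (phiE \<nu> v)"
  unfolding phiE_def vadd_def by (auto simp: algebra_simps)

lemma phiE_B: "Bf (Suc \<nu>) 1 (phiE \<nu> u) (phiE \<nu> v) = Bf \<nu> 2 u v"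
  unfolding Bf_polar phiE_add[symmetric] phiE_Q ..

lemma phiE_S: "u \<in> Sset \<nu> 2 \<Longrightarrow> phiE \<nu> u \<in> Sset (Suc \<nu>) 1"
proof -
  assume u: "u \<in> Sset \<nu> 2"
  have F: "phiE \<nu> u \<in> Fn (2 * Suc \<nu> + 1)" using u unfolding Sset_def Fn_def phiE_def by auto
  obtain i where i: "u i \<noteq> 0" using u unfolding Sset_def by auto
  have il: "i < 2*\<nu>+2"
  proof (rule ccontr)
    assume "\<not> i < 2*\<nu>+2" then have "u i = 0" using u unfolding Sset_def Fn_def by auto
    then show False using i by simp
  qed
  have "phiE \<nu> u \<noteq> (\<lambda>i. 0)"
  proof
    assume z: "phiE \<nu> u = (\<lambda>i. 0)"
    consider "i < \<nu>" | "\<nu> \<le> i \<and> i < 2*\<nu>" | "i = 2*\<nu>" | "i = 2*\<nu>+1" using il by linarith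
    then show False
    proof cases
      case 1 then show False using fun_cong[OF z, of i] i by (simp add: phiE_def)
    next
      case 2 then show False using fun_cong[OF z, of "i+1"] i by (simp add: phiE_def)
    next
      case 3 then show False using fun_cong[OF z, of \<nu>] i by (simp add: phiE_def)
    next
      case 4 then show False using fun_cong[OF z, of "2*\<nu>+1"] i by (simp add: phiE_def)
    qed
  qed
  moreover have "Qf (Suc \<nu>) 1 (phiE \<nu> u) = 0" using u unfolding phiE_Q Sset_def by simp
  ultimately show ?thesis using F unfolding Sset_def by simp
qed

lemma colour_E:
  assumes n: "\<nu> \<ge> 1"
  shows "\<exists>col. (\<forall>u\<in>Sset \<nu> 2. col u < (2::nat)^(Suc \<nu>) + 1) \<and> (\<forall>u\<in>Sset \<nu> 2. \<forall>v\<in>Sset \<nu> 2. col u = col v \<longrightarrow> Bf \<nu> 2 u v = 0)"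
proof -
  obtain col where c: "\<forall>u\<in>Sset (Suc \<nu>) 1. col u < (2::nat)^(Suc \<nu>) + 1"
    "\<forall>u\<in>Sset (Suc \<nu>) 1. \<forall>v\<in>Sset (Suc \<nu>) 1. col u = col v \<longrightarrow> Bf (Suc \<nu>) 1 u v = 0"
    using colour_P[of "Suc \<nu>"] by auto
  show ?thesis
    by (rule exI[of _ "\<lambda>u. col (phiE \<nu> u)"]) (use c phiE_S phiE_B in metis)
qed


lemma unit_mod_odd: "n \<ge> 1 \<Longrightarrow> unit_mod n x \<longleftrightarrow> odd x"
  unfolding unit_mod_def by (simp add: coprime_power_right_iff coprime_right_2_iff_odd)

definition Qc :: "nat \<Rightarrow> nat \<Rightarrow> 'r::comm_ring_1 \<Rightarrow> (nat \<Rightarrow> 'r) \<Rightarrow> (nat \<Rightarrow> 'r) \<Rightarrow> 'r" where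
  "Qc \<nu> \<delta> \<zeta> a b = (\<Sum>i<\<nu>. a i * b (\<nu> + i)) + (if \<delta> = 1 then a (2*\<nu>) * b (2*\<nu>)
     else if \<delta> = 2 then \<zeta> * a (2*\<nu>) * b (2*\<nu>) + a (2*\<nu>) * b (2*\<nu>+1) + \<zeta> * a (2*\<nu>+1) * b (2*\<nu>+1) else 0)"

definition Rrow :: "nat \<Rightarrow> nat \<Rightarrow> 'r::comm_ring_1 \<Rightarrow> (nat \<Rightarrow> 'r) \<Rightarrow> nat \<Rightarrow> 'r" where
  "Rrow \<nu> \<delta> \<zeta> b i = (if i < \<nu> then b (\<nu>+i) else if i < 2*\<nu> then 0 else if \<delta> = 1 then b (2*\<nu>)
     else if i = 2*\<nu> then \<zeta> * b (2*\<nu>) + b (2*\<nu>+1) else \<zeta> * b (2*\<nu>+1))"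

lemma row_sum:
  fixes b :: "nat \<Rightarrow> 'r::comm_ring_1"
  assumes d: "\<delta> \<le> 2" and i: "i < 2*\<nu>+\<delta>"
  shows "(\<Sum>j<2*\<nu>+\<delta>. of_int (Gmat \<nu> \<delta> z i j) * b j) = Rrow \<nu> \<delta> (of_int z) b i"
proof -
  consider "i < \<nu>" | "\<nu> \<le> i \<and> i < 2*\<nu>" | "i = 2*\<nu> \<and> \<delta> = 1" | "i = 2*\<nu> \<and> \<delta> = 2" | "i = 2*\<nu>+1 \<and> \<delta> = 2"
    using d i by linarith
  then show ?thesis
  proof cases
    case 1
    have "(\<Sum>j<2*\<nu>+\<delta>. of_int (Gmat \<nu> \<delta> z i j) * b j) = (\<Sum>j<2*\<nu>+\<delta>. if j = \<nu>+i then b j else 0)"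
      by (rule sum.cong) (use 1 in \<open>auto simp: Gmat_def\<close>)
    also have "\<dots> = b (\<nu>+i)" using 1 by (simp add: sum.delta')
    finally show ?thesis using 1 by (simp add: Rrow_def)
  next
    case 2
    have "(\<Sum>j<2*\<nu>+\<delta>. of_int (Gmat \<nu> \<delta> z i j) * b j) = (\<Sum>j<2*\<nu>+\<delta>. 0)"
      by (rule sum.cong) (use 2 in \<open>auto simp: Gmat_def\<close>)
    then show ?thesis using 2 by (simp add: Rrow_def)
  next
    case 3
    have "(\<Sum>j<2*\<nu>+\<delta>. of_int (Gmat \<nu> \<delta> z i j) * b j) = (\<Sum>j<2*\<nu>+\<delta>. if j = 2*\<nu> then b j else 0)"
      by (rule sum.cong) (use 3 in \<open>auto simp: Gmat_def\<close>)
    also have "\<dots> = b (2*\<nu>)" using 3 by (simp add: sum.delta')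
    finally show ?thesis using 3 by (simp add: Rrow_def)
  next
    case 4
    have "(\<Sum>j<2*\<nu>+\<delta>. of_int (Gmat \<nu> \<delta> z i j) * b j)
        = (\<Sum>j<2*\<nu>+\<delta>. (if j = 2*\<nu> then of_int z * b j else 0) + (if j = 2*\<nu>+1 then b j else 0))"
      by (rule sum.cong) (use 4 in \<open>auto simp: Gmat_def\<close>)
    also have "\<dots> = of_int z * b (2*\<nu>) + b (2*\<nu>+1)" using 4 by (simp add: sum.distrib sum.delta')
    finally show ?thesis using 4 by (simp add: Rrow_def)
  next
    case 5
    have "(\<Sum>j<2*\<nu>+\<delta>. of_int (Gmat \<nu> \<delta> z i j) * b j) = (\<Sum>j<2*\<nu>+\<delta>. if j = 2*\<nu>+1 then of_int z * b j else 0)"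
      by (rule sum.cong) (use 5 in \<open>auto simp: Gmat_def\<close>)
    also have "\<dots> = of_int z * b (2*\<nu>+1)" using 5 by (simp add: sum.delta')
    finally show ?thesis using 5 by (simp add: Rrow_def)
  qed
qed

lemma sum_2nu: "(\<Sum>i<2*\<nu>. a i * Rrow \<nu> \<delta> \<zeta> b i) = (\<Sum>i<\<nu>. a i * b (\<nu> + i))"
proof -
  have "(\<Sum>i<2*\<nu>. a i * Rrow \<nu> \<delta> \<zeta> b i) = (\<Sum>i\<in>{0..<\<nu>}. a i * Rrow \<nu> \<delta> \<zeta> b i) + (\<Sum>i\<in>{\<nu>..<2*\<nu>}. a i * Rrow \<nu> \<delta> \<zeta> b i)"
    by (simp add: sum.atLeastLessThan_concat lessThan_atLeast0)
  also have "(\<Sum>i\<in>{\<nu>..<2*\<nu>}. a i * Rrow \<nu> \<delta> \<zeta> b i) = 0"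
    by (rule sum.neutral) (auto simp: Rrow_def)
  also have "(\<Sum>i\<in>{0..<\<nu>}. a i * Rrow \<nu> \<delta> \<zeta> b i) = (\<Sum>i<\<nu>. a i * b (\<nu> + i))"
    by (simp add: lessThan_atLeast0 Rrow_def)
  finally show ?thesis by simp
qed

lemma bform_gen:
  fixes a b :: "nat \<Rightarrow> 'r::comm_ring_1"
  assumes d: "\<delta> \<le> 2"
  shows "(\<Sum>i<2*\<nu>+\<delta>. \<Sum>j<2*\<nu>+\<delta>. a i * of_int (Gmat \<nu> \<delta> z i j) * b j) = Qc \<nu> \<delta> (of_int z) a b"
proof -
  have "(\<Sum>i<2*\<nu>+\<delta>. \<Sum>j<2*\<nu>+\<delta>. a i * of_int (Gmat \<nu> \<delta> z i j) * b j)
      = (\<Sum>i<2*\<nu>+\<delta>. a i * Rrow \<nu> \<delta> (of_int z) b i)"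
  proof (rule sum.cong[OF refl])
    fix i assume "i \<in> {..<2*\<nu>+\<delta>}"
    then have i: "i < 2*\<nu>+\<delta>" by simp
    have "(\<Sum>j<2*\<nu>+\<delta>. a i * of_int (Gmat \<nu> \<delta> z i j) * b j) = a i * (\<Sum>j<2*\<nu>+\<delta>. of_int (Gmat \<nu> \<delta> z i j) * b j)"
      by (simp add: sum_distrib_left mult.assoc)
    also have "(\<Sum>j<2*\<nu>+\<delta>. of_int (Gmat \<nu> \<delta> z i j) * b j) = Rrow \<nu> \<delta> (of_int z) b i"
      by (rule row_sum[OF d i])
    finally show "(\<Sum>j<2*\<nu>+\<delta>. a i * of_int (Gmat \<nu> \<delta> z i j) * b j) = a i * Rrow \<nu> \<delta> (of_int z) b i" .
  qed
  also have "\<dots> = Qc \<nu> \<delta> (of_int z) a b"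
  proof -
    consider "\<delta> = 0" | "\<delta> = 1" | "\<delta> = 2" using d by linarith
    then show ?thesis
    proof cases
      case 1 then show ?thesis using sum_2nu by (simp add: Qc_def)
    next
      case 2 then show ?thesis using sum_2nu[of a \<nu> \<delta> "of_int z" b] by (simp add: Qc_def Rrow_def)
    next
      case 3 then show ?thesis using sum_2nu[of a \<nu> \<delta> "of_int z" b]
        by (simp add: Qc_def Rrow_def algebra_simps)
    qed
  qed
  finally show ?thesis .
qed

lemma bform_int: "\<delta> \<le> 2 \<Longrightarrow> bform (2*\<nu>+\<delta>) (Gmat \<nu> \<delta> z) a b = Qc \<nu> \<delta> z a b"
  using bform_gen[of \<delta> a \<nu> z b] unfolding bform_def by simp

lemma bform_sym: "bform m (\<lambda>i j. M i j + M j i) a b = bform m M a b + bform m M b a"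
proof -
  have "bform m (\<lambda>i j. M i j + M j i) a b = bform m M a b + (\<Sum>i<m. \<Sum>j<m. a i * M j i * b j)"
    unfolding bform_def by (simp add: algebra_simps sum.distrib)
  also have "(\<Sum>i<m. \<Sum>j<m. a i * M j i * b j) = bform m M b a"
    unfolding bform_def by (subst sum.swap) (simp add: ac_simps)
  finally show ?thesis .
qed

definition redv :: "(nat \<Rightarrow> int) \<Rightarrow> nat \<Rightarrow> gf2" where
  "redv a = (\<lambda>i. of_int (a i))"

lemma of_int_bform: "(of_int (bform m M a b) :: gf2) = (\<Sum>i<m. \<Sum>j<m. redv a i * of_int (M i j) * redv b j)"
  unfolding bform_def redv_def by simp

lemma gf2_z: "odd z \<Longrightarrow> (of_int z :: gf2) = 1"
  using gf2_of_int_1 by simp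

lemma red_Q:
  assumes "\<delta> \<le> 2" "odd z"
  shows "(of_int (bform (2*\<nu>+\<delta>) (Gmat \<nu> \<delta> z) a a) :: gf2) = Qf \<nu> \<delta> (redv a)"
proof -
  have "(of_int (bform (2*\<nu>+\<delta>) (Gmat \<nu> \<delta> z) a a) :: gf2) = Qc \<nu> \<delta> (of_int z) (redv a) (redv a)"
    unfolding of_int_bform by (rule bform_gen[OF assms(1)])
  then show ?thesis using gf2_z[OF assms(2)] unfolding Qc_def Qf_def aniso_def dotp_def by simp
qed

lemma red_B:
  assumes "\<delta> \<le> 2" "odd z"
  shows "(of_int (bform (2*\<nu>+\<delta>) (\<lambda>i j. Gmat \<nu> \<delta> z i j + Gmat \<nu> \<delta> z j i) a b) :: gf2) = Bf \<nu> \<delta> (redv a) (redv b)"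
proof -
  have "(of_int (bform (2*\<nu>+\<delta>) (\<lambda>i j. Gmat \<nu> \<delta> z i j + Gmat \<nu> \<delta> z j i) a b) :: gf2)
      = Qc \<nu> \<delta> (of_int z) (redv a) (redv b) + Qc \<nu> \<delta> (of_int z) (redv b) (redv a)"
    unfolding bform_sym of_int_add of_int_bform bform_gen[OF assms(1)] ..
  then show ?thesis using gf2_z[OF assms(2)] unfolding Qc_def Bf_def dotp_def
    by (simp add: algebra_simps gf2_two)
qed


lemma of_int_mod2n: "n \<ge> 1 \<Longrightarrow> (of_int (x mod 2^n) :: gf2) = of_int x"
proof -
  assume n: "n \<ge> 1"
  have "(2::int) dvd 2^n" using n by (simp add: dvd_power)
  moreover have "x - x mod 2^n = 2^n * (x div 2^n)" by (simp add: minus_mod_eq_mult_div)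
  ultimately have "even (x - x mod 2^n)" by simp
  then have "(of_int (x - x mod 2^n) :: gf2) = 0" by (simp only: gf2_of_int_0)
  then have "(of_int x :: gf2) - of_int (x mod 2^n) = 0" by (simp only: of_int_diff)
  then show ?thesis by (simp only: right_minus_eq)
qed

lemma Fn_lt: "u \<in> Fn m \<Longrightarrow> u i \<noteq> 0 \<Longrightarrow> i < m"
  unfolding Fn_def by (rule ccontr) auto

lemma self_in_class: "a \<in> Vset n m \<Longrightarrow> a \<in> vclass n m a"
  unfolding vclass_def vsim_def unit_mod_def by (auto intro!: exI[of _ 1])

lemma class_red:
  assumes n: "n \<ge> 1" and a: "a \<in> Vset n m" and b: "b \<in> vclass n m a"
  shows "redv b = redv a"
proof
  fix i
  have bV: "b \<in> Vset n m" and s: "vsim n m b a" using b unfolding vclass_def by auto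
  obtain c where c: "unit_mod n c" "\<forall>i<m. b i mod 2 ^ n = (c * a i) mod 2 ^ n"
    using s unfolding vsim_def by auto
  have c1: "(of_int c :: gf2) = 1" using c(1) unit_mod_odd[OF n] gf2_z by simp
  show "redv b i = redv a i"
  proof (cases "i < m")
    case True
    have "(of_int (b i) :: gf2) = of_int (b i mod 2^n)" using of_int_mod2n[OF n] by simp
    also have "\<dots> = of_int ((c * a i) mod 2^n)" using c(2) True by simp
    also have "\<dots> = of_int (a i)" using of_int_mod2n[OF n] c1 by simp
    finally show ?thesis unfolding redv_def .
  next
    case False
    then show ?thesis using a bV unfolding redv_def Vset_def by auto
  qed
qed

definition redX :: "(nat \<Rightarrow> int) set \<Rightarrow> nat \<Rightarrow> gf2" where
  "redX X = redv (SOME a. a \<in> X)"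

lemma redX_eq:
  assumes n: "n \<ge> 1" and a: "a \<in> Vset n m" and b: "b \<in> vclass n m a"
  shows "redX (vclass n m a) = redv b"
proof -
  have "(SOME a'. a' \<in> vclass n m a) \<in> vclass n m a"
    by (rule someI[where P="\<lambda>a'. a' \<in> vclass n m a", OF self_in_class[OF a]])
  then have "redX (vclass n m a) = redv a" unfolding redX_def using class_red[OF n a] by blast
  then show ?thesis using class_red[OF n a b] by simp
qed

context
  fixes n \<nu> \<delta> :: nat and z :: int
  assumes n: "n \<ge> 1" and d: "\<delta> \<le> 2" and zo: "odd z"
begin

lemma vert_dest:
  assumes "X \<in> orth_vertices n \<nu> \<delta> z"
  obtains a where "X = vclass n (2*\<nu>+\<delta>) a" "a \<in> Vset n (2*\<nu>+\<delta>)"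
    "bform (2*\<nu>+\<delta>) (Gmat \<nu> \<delta> z) a a mod 2 ^ n = 0"
  using assms unfolding orth_vertices_def by auto

lemma R1: "X \<in> orth_vertices n \<nu> \<delta> z \<Longrightarrow> redX X \<in> Sset \<nu> \<delta>"
proof -
  assume "X \<in> orth_vertices n \<nu> \<delta> z"
  then obtain a where a: "X = vclass n (2*\<nu>+\<delta>) a" "a \<in> Vset n (2*\<nu>+\<delta>)"
    "bform (2*\<nu>+\<delta>) (Gmat \<nu> \<delta> z) a a mod 2 ^ n = 0" by (rule vert_dest)
  have rX: "redX X = redv a" using redX_eq[OF n a(2) self_in_class[OF a(2)]] a(1) by simp
  have F: "redv a \<in> Fn (2*\<nu>+\<delta>)" using a(2) unfolding Vset_def Fn_def redv_def by auto
  obtain i where i: "i < 2*\<nu>+\<delta>" "unit_mod n (a i)" using a(2) unfolding Vset_def by auto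
  have "redv a i = 1" using i(2) unit_mod_odd[OF n] gf2_of_int_1 unfolding redv_def by simp
  then have nz: "redv a \<noteq> (\<lambda>i. 0)" by (metis one_neq_zero)
  have "(2::int) dvd 2^n" using n by (simp add: dvd_power)
  then have ev: "even (bform (2*\<nu>+\<delta>) (Gmat \<nu> \<delta> z) a a)" using a(3) by (meson dvd_trans mod_0_imp_dvd)
  have e0: "(of_int (bform (2*\<nu>+\<delta>) (Gmat \<nu> \<delta> z) a a) :: gf2) = 0" by (simp only: gf2_of_int_0) (rule ev)
  have "Qf \<nu> \<delta> (redv a) = of_int (bform (2*\<nu>+\<delta>) (Gmat \<nu> \<delta> z) a a)" by (rule red_Q[symmetric, OF d zo])
  also have "\<dots> = 0" by (rule e0)
  finally have "Qf \<nu> \<delta> (redv a) = 0" .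
  then show ?thesis unfolding rX Sset_def using F nz by simp
qed

lemma R2:
  assumes X: "X \<in> orth_vertices n \<nu> \<delta> z" and Y: "Y \<in> orth_vertices n \<nu> \<delta> z"
  shows "orth_adj n \<nu> \<delta> z X Y \<longleftrightarrow> Bf \<nu> \<delta> (redX X) (redX Y) \<noteq> 0"
proof -
  obtain a where a: "X = vclass n (2*\<nu>+\<delta>) a" "a \<in> Vset n (2*\<nu>+\<delta>)" using X by (rule vert_dest)
  obtain b where b: "Y = vclass n (2*\<nu>+\<delta>) b" "b \<in> Vset n (2*\<nu>+\<delta>)" using Y by (rule vert_dest)
  have key: "unit_mod n (bform (2*\<nu>+\<delta>) (\<lambda>i j. Gmat \<nu> \<delta> z i j + Gmat \<nu> \<delta> z j i) a' b')
      \<longleftrightarrow> Bf \<nu> \<delta> (redX X) (redX Y) \<noteq> 0" if "a' \<in> X" "b' \<in> Y" for a' b'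
  proof -
    have "redX X = redv a'" using redX_eq[OF n a(2)] that(1) a(1) by simp
    moreover have "redX Y = redv b'" using redX_eq[OF n b(2)] that(2) b(1) by simp
    moreover have "Bf \<nu> \<delta> (redv a') (redv b') = of_int (bform (2*\<nu>+\<delta>) (\<lambda>i j. Gmat \<nu> \<delta> z i j + Gmat \<nu> \<delta> z j i) a' b')"
      by (rule red_B[symmetric, OF d zo])
    ultimately show ?thesis unfolding unit_mod_odd[OF n] by (simp only: gf2_of_int_0)
  qed
  have "a \<in> X" "b \<in> Y" using a b self_in_class by auto
  then show ?thesis unfolding orth_adj_def using key by blast
qed

lemma Qc_upd_y:
  fixes a :: "nat \<Rightarrow> 'r::comm_ring_1"
  assumes "i0 < \<nu>"
  shows "Qc \<nu> \<delta> \<zeta> (a(\<nu>+i0 := a (\<nu>+i0) + t)) (a(\<nu>+i0 := a (\<nu>+i0) + t)) = Qc \<nu> \<delta> \<zeta> a a + a i0 * t"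
proof -
  let ?a = "a(\<nu>+i0 := a (\<nu>+i0) + t)"
  have "(\<Sum>i<\<nu>. ?a i * ?a (\<nu> + i)) = (\<Sum>i<\<nu>. a i * a (\<nu> + i) + (if i = i0 then a i0 * t else 0))"
    by (rule sum.cong) (use assms in \<open>auto simp: algebra_simps\<close>)
  also have "\<dots> = (\<Sum>i<\<nu>. a i * a (\<nu> + i)) + a i0 * t" using assms by (simp add: sum.distrib)
  finally show ?thesis using assms unfolding Qc_def by simp
qed

lemma Qc_upd_x:
  fixes a :: "nat \<Rightarrow> 'r::comm_ring_1"
  assumes "i0 < \<nu>"
  shows "Qc \<nu> \<delta> \<zeta> (a(i0 := a i0 + t)) (a(i0 := a i0 + t)) = Qc \<nu> \<delta> \<zeta> a a + t * a (\<nu>+i0)"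
proof -
  let ?a = "a(i0 := a i0 + t)"
  have "(\<Sum>i<\<nu>. ?a i * ?a (\<nu> + i)) = (\<Sum>i<\<nu>. a i * a (\<nu> + i) + (if i = i0 then t * a (\<nu>+i0) else 0))"
    by (rule sum.cong) (use assms in \<open>auto simp: algebra_simps\<close>)
  also have "\<dots> = (\<Sum>i<\<nu>. a i * a (\<nu> + i)) + t * a (\<nu>+i0)" using assms by (simp add: sum.distrib)
  finally show ?thesis using assms unfolding Qc_def by simp
qed

lemma sum_mod_cong:
  fixes f g :: "'b \<Rightarrow> int"
  assumes "\<And>i. i \<in> A \<Longrightarrow> f i mod K = g i mod K"
  shows "sum f A mod K = sum g A mod K"
proof -
  have "sum f A mod K = (\<Sum>i\<in>A. f i mod K) mod K" by (simp add: mod_sum_eq)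
  also have "\<dots> = (\<Sum>i\<in>A. g i mod K) mod K" using assms by simp
  also have "\<dots> = sum g A mod K" by (simp add: mod_sum_eq)
  finally show ?thesis .
qed

lemma bform_mod:
  assumes "\<And>i. a i mod K = b i mod K"
  shows "bform m M a a mod K = bform m M b b mod K"
  unfolding bform_def
  by (intro sum_mod_cong) (intro mod_mult_cong assms refl)

lemma R3:
  assumes u: "u \<in> Sset \<nu> \<delta>"
  shows "\<exists>X\<in>orth_vertices n \<nu> \<delta> z. redX X = u"
proof -
  define m where "m = 2*\<nu>+\<delta>"
  have uF: "u \<in> Fn m" "u \<noteq> (\<lambda>i. 0)" "Qf \<nu> \<delta> u = 0" using u unfolding Sset_def m_def by auto
  define a0 :: "nat \<Rightarrow> int" where "a0 i = (if u i = 1 then 1 else 0)" for i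
  have ra0: "redv a0 = u"
  proof
    fix i show "redv a0 i = u i" using gf2_cases[of "u i"] unfolding redv_def a0_def by auto
  qed
  have a0m: "a0 i = 0" if "i \<ge> m" for i using uF(1) that unfolding a0_def Fn_def by auto
  define Q0 where "Q0 = Qc \<nu> \<delta> z a0 a0"
  have "(of_int Q0 :: gf2) = 0" using red_Q[OF d zo, of \<nu> a0] uF(3) ra0 bform_int[OF d]
    unfolding Q0_def by simp
  then have eQ0: "even Q0" by (simp add: gf2_of_int_0)
  have "\<exists>i0<\<nu>. u i0 \<noteq> 0 \<or> u (\<nu>+i0) \<noteq> 0"
  proof (rule ccontr)
    assume "\<not> ?thesis"
    then have all0: "\<forall>i<\<nu>. u i = 0 \<and> u (\<nu>+i) = 0" by auto
    then have "dotp \<nu> u (\<lambda>i. u (\<nu> + i)) = 0" unfolding dotp_def by simp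
    then have "aniso \<delta> (u (2*\<nu>)) (u (2*\<nu>+1)) = 0" using uF(3) unfolding Qf_def by simp
    from aniso_zero[OF d this] have az: "\<delta> \<ge> 1 \<longrightarrow> u (2*\<nu>) = 0" "\<delta> \<ge> 2 \<longrightarrow> u (2*\<nu>+1) = 0" by auto
    have "u i = 0" for i
    proof (rule ccontr)
      assume ui: "u i \<noteq> 0"
      then have "i < m" by (rule Fn_lt[OF uF(1)])
      then have "i < \<nu> \<or> (\<nu> \<le> i \<and> i < 2*\<nu>) \<or> (i = 2*\<nu> \<and> \<delta> \<ge> 1) \<or> (i = 2*\<nu>+1 \<and> \<delta> \<ge> 2)"
        unfolding m_def using d by linarith
      moreover have "\<not> (\<nu> \<le> i \<and> i < 2*\<nu>)"
      proof
        assume "\<nu> \<le> i \<and> i < 2*\<nu>"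
        then have "i - \<nu> < \<nu>" "\<nu> + (i - \<nu>) = i" by auto
        then show False using all0 ui by metis
      qed
      ultimately show False using all0 az ui by auto
    qed
    then show False using uF(2) by auto
  qed
  then obtain i0 where i0: "i0 < \<nu>" "u i0 \<noteq> 0 \<or> u (\<nu>+i0) \<noteq> 0" by blast
  obtain a1 :: "nat \<Rightarrow> int" where a1: "Qc \<nu> \<delta> z a1 a1 = 0" "redv a1 = u" "\<And>i. i \<ge> m \<Longrightarrow> a1 i = 0"
  proof (cases "u i0 \<noteq> 0")
    case True
    define a1 where "a1 = a0(\<nu>+i0 := a0 (\<nu>+i0) + (- Q0))"
    have "a0 i0 = 1" using True gf2_neq0 unfolding a0_def by simp
    then have "Qc \<nu> \<delta> z a1 a1 = 0" unfolding a1_def Qc_upd_y[OF i0(1)] Q0_def by simp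
    moreover have "redv a1 = u" unfolding a1_def ra0[symmetric] redv_def using eQ0
      by (auto intro!: ext simp: gf2_of_int_0)
    moreover have "a1 i = 0" if "i \<ge> m" for i using a0m[OF that] that i0(1) unfolding a1_def m_def by auto
    ultimately show ?thesis using that by blast
  next
    case False
    then have u2: "u (\<nu>+i0) \<noteq> 0" using i0(2) by simp
    define a1 where "a1 = a0(i0 := a0 i0 + (- Q0))"
    have "a0 (\<nu>+i0) = 1" using u2 gf2_neq0 unfolding a0_def by simp
    then have "Qc \<nu> \<delta> z a1 a1 = 0" unfolding a1_def Qc_upd_x[OF i0(1)] Q0_def by simp
    moreover have "redv a1 = u" unfolding a1_def ra0[symmetric] redv_def using eQ0
      by (auto intro!: ext simp: gf2_of_int_0)
    moreover have "a1 i = 0" if "i \<ge> m" for i using a0m[OF that] that i0(1) unfolding a1_def m_def by auto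
    ultimately show ?thesis using that by blast
  qed
  define a2 where "a2 i = a1 i mod 2^n" for i
  have ra2: "redv a2 = u" unfolding a2_def using a1(2) of_int_mod2n[OF n] unfolding redv_def by auto
  have a2V: "a2 \<in> Vset n m"
  proof -
    have "\<forall>i<m. 0 \<le> a2 i \<and> a2 i < 2 ^ n" unfolding a2_def by simp
    moreover have "\<forall>i\<ge>m. a2 i = 0" unfolding a2_def using a1(3) by simp
    moreover have "\<exists>i<m. unit_mod n (a2 i)"
    proof -
      obtain i where ui: "u i \<noteq> 0" using uF(2) by auto
      then have "i < m" by (rule Fn_lt[OF uF(1)])
      moreover have "(of_int (a2 i) :: gf2) = 1" using ra2 ui gf2_neq0 unfolding redv_def by metis
      then have "odd (a2 i)" using gf2_of_int_1 by simp
      ultimately show ?thesis using unit_mod_odd[OF n] by blast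
    qed
    ultimately show ?thesis unfolding Vset_def by blast
  qed
  have "bform m (Gmat \<nu> \<delta> z) a2 a2 mod 2^n = bform m (Gmat \<nu> \<delta> z) a1 a1 mod 2^n"
    by (rule bform_mod) (simp add: a2_def)
  also have "bform m (Gmat \<nu> \<delta> z) a1 a1 = 0" unfolding m_def bform_int[OF d] by (rule a1(1))
  finally have Q2: "bform m (Gmat \<nu> \<delta> z) a2 a2 mod 2^n = 0" by simp
  have c2: "a2 \<in> Vset n (2*\<nu>+\<delta>) \<and> bform (2*\<nu>+\<delta>) (Gmat \<nu> \<delta> z) a2 a2 mod 2^n = 0"
    using a2V Q2 unfolding m_def by simp
  have "vclass n m a2 \<in> orth_vertices n \<nu> \<delta> z" unfolding orth_vertices_def m_def
    by (rule CollectI, rule exI[of _ a2]) (use c2 in simp)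
  moreover have "redX (vclass n m a2) = u" using redX_eq[OF n a2V self_in_class[OF a2V]] ra2 by simp
  ultimately show ?thesis by blast
qed

end


lemma LB_S:
  fixes k :: nat and g :: "(nat \<Rightarrow> gf2) \<Rightarrow> nat"
  assumes d: "\<delta> \<le> 2" and n: "\<nu> \<ge> 1"
    and g: "\<forall>u\<in>Sset \<nu> \<delta>. g u < k" "\<forall>u\<in>Sset \<nu> \<delta>. \<forall>v\<in>Sset \<nu> \<delta>. Bf \<nu> \<delta> u v \<noteq> 0 \<longrightarrow> g u \<noteq> g v"
  shows "2^(\<nu>+\<delta>-1) + 1 \<le> k"
proof -
  define C where "C c = {u\<in>Sset \<nu> \<delta>. g u = c}" for c
  have cC: "card (C c) \<le> 2^\<nu> - 1" for c
  proof (rule indep_bound[OF d])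
    show "C c \<subseteq> Sset \<nu> \<delta>" unfolding C_def by auto
    show "\<forall>u\<in>C c. \<forall>v\<in>C c. Bf \<nu> \<delta> u v = 0"
    proof (intro ballI)
      fix u v assume "u \<in> C c" "v \<in> C c"
      then have uv: "u \<in> Sset \<nu> \<delta>" "v \<in> Sset \<nu> \<delta>" "g u = g v" unfolding C_def by auto
      show "Bf \<nu> \<delta> u v = 0"
      proof (rule ccontr)
        assume "Bf \<nu> \<delta> u v \<noteq> 0"
        then have "g u \<noteq> g v" using g(2) uv(1,2) by blast
        then show False using uv(3) by simp
      qed
    qed
  qed
  have "Sset \<nu> \<delta> \<subseteq> (\<Union>c\<in>{..<k}. C c)" unfolding C_def using g(1) by auto
  then have "card (Sset \<nu> \<delta>) \<le> card (\<Union>c\<in>{..<k}. C c)"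
  proof (rule card_mono[rotated])
    have "finite (C c)" for c unfolding C_def using Sset_finite[of \<nu> \<delta>] by simp
    then show "finite (\<Union>c\<in>{..<k}. C c)" by (intro finite_UN_I finite_lessThan)
  qed
  also have "\<dots> \<le> (\<Sum>c<k. card (C c))" by (rule card_UN_le) simp
  also have "\<dots> \<le> (\<Sum>c<k. 2^\<nu> - 1)" by (rule sum_mono) (rule cC)
  also have "\<dots> = k * (2^\<nu> - 1)" by simp
  finally have up: "card (Sset \<nu> \<delta>) \<le> k * (2^\<nu> - 1)" .
  have lo: "(2^(\<nu>+\<delta>-1) + 1) * (2^\<nu> - 1) \<le> card (Sset \<nu> \<delta>)" by (rule card_S_lb[OF d n])
  have pos: "(0::nat) < 2^\<nu> - 1" using one_less_pow2[OF n] by simp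
  from lo up have "(2^(\<nu>+\<delta>-1) + 1) * (2^\<nu> - 1) \<le> k * (2^\<nu> - 1)" by (rule le_trans)
  then have "0 < (2::nat)^\<nu> - 1 \<longrightarrow> 2^(\<nu>+\<delta>-1) + 1 \<le> k" by (simp only: mult_le_cancel2)
  then show ?thesis using pos by blast
qed

lemma chrom_main:
  fixes V :: "'v set" and E :: "'v \<Rightarrow> 'v \<Rightarrow> bool" and red :: "'v \<Rightarrow> nat \<Rightarrow> gf2"
    and S :: "(nat \<Rightarrow> gf2) set" and B :: "(nat \<Rightarrow> gf2) \<Rightarrow> (nat \<Rightarrow> gf2) \<Rightarrow> gf2"
  assumes R1: "\<And>X. X \<in> V \<Longrightarrow> red X \<in> S"
    and R2: "\<And>X Y. X \<in> V \<Longrightarrow> Y \<in> V \<Longrightarrow> E X Y \<longleftrightarrow> B (red X) (red Y) \<noteq> 0"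
    and R3: "\<And>u. u \<in> S \<Longrightarrow> \<exists>X\<in>V. red X = u"
    and Bself: "\<And>u. B u u = 0"
    and UB: "\<exists>col. (\<forall>u\<in>S. col u < K) \<and> (\<forall>u\<in>S. \<forall>v\<in>S. col u = col v \<longrightarrow> B u v = 0)"
    and LB: "\<And>k g. \<forall>u\<in>S. g u < k \<Longrightarrow> \<forall>u\<in>S. \<forall>v\<in>S. B u v \<noteq> 0 \<longrightarrow> g u \<noteq> g v \<Longrightarrow> K \<le> k"
  shows "chromatic_number V E = K"
  unfolding chromatic_number_def
proof (rule Least_equality)
  obtain col where col: "\<forall>u\<in>S. col u < K" "\<forall>u\<in>S. \<forall>v\<in>S. col u = col v \<longrightarrow> B u v = 0"
    using UB by blast
  have "proper_colouring V E K (\<lambda>X. col (red X))"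
    unfolding proper_colouring_def
  proof (intro conjI ballI impI)
    fix X assume "X \<in> V" then show "col (red X) < K" using col(1) R1 by blast
  next
    fix X Y assume X: "X \<in> V" and Y: "Y \<in> V" and e: "X \<noteq> Y \<and> E X Y"
    then have "B (red X) (red Y) \<noteq> 0" using R2 by blast
    then show "col (red X) \<noteq> col (red Y)" using col(2) R1[OF X] R1[OF Y] by blast
  qed
  then show "\<exists>f. proper_colouring V E K f" by blast
next
  fix k assume "\<exists>f. proper_colouring V E k f"
  then obtain f where f: "proper_colouring V E k f" by blast
  define lift where "lift u = (SOME X. X \<in> V \<and> red X = u)" for u
  have lift: "lift u \<in> V \<and> red (lift u) = u" if "u \<in> S" for u
    unfolding lift_def using R3[OF that] by (rule someI_ex[where P="\<lambda>X. X \<in> V \<and> red X = u", OF bexE]) blast+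
  show "K \<le> k"
  proof (rule LB)
    show "\<forall>u\<in>S. f (lift u) < k" using f lift unfolding proper_colouring_def by blast
    show "\<forall>u\<in>S. \<forall>v\<in>S. B u v \<noteq> 0 \<longrightarrow> f (lift u) \<noteq> f (lift v)"
    proof (intro ballI impI)
      fix u v assume u: "u \<in> S" and v: "v \<in> S" and b: "B u v \<noteq> 0"
      have ne: "lift u \<noteq> lift v"
      proof
        assume "lift u = lift v"
        then have "u = v" using lift[OF u] lift[OF v] by metis
        then show False using b Bself by simp
      qed
      have "E (lift u) (lift v)" using R2[of "lift u" "lift v"] lift[OF u] lift[OF v] b by simp
      then show "f (lift u) \<noteq> f (lift v)" using f ne lift[OF u] lift[OF v] unfolding proper_colouring_def by blast
    qed
  qed
qed

theorem theorem2p7: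
  fixes n \<nu> \<delta> :: nat and z :: int
  assumes "n \<ge> 1" and "\<nu> \<ge> 1" and "\<delta> \<in> {0, 1, 2}"
    and "\<not> (\<delta> = 0 \<and> odd \<nu>)"
    and "unit_mod n z"
  shows "chromatic_number (orth_vertices n \<nu> \<delta> z) (orth_adj n \<nu> \<delta> z)
           = 2 ^ (\<nu> + \<delta> - 1) + 1"
proof -
  have n: "n \<ge> 1" and nu: "\<nu> \<ge> 1" using assms by auto
  have d: "\<delta> \<le> 2" using assms(3) by auto
  have zo: "odd z" using assms(5) unit_mod_odd[OF n] by simp
  have UB: "\<exists>col. (\<forall>u\<in>Sset \<nu> \<delta>. col u < (2::nat) ^ (\<nu> + \<delta> - 1) + 1) \<and>
      (\<forall>u\<in>Sset \<nu> \<delta>. \<forall>v\<in>Sset \<nu> \<delta>. col u = col v \<longrightarrow> Bf \<nu> \<delta> u v = 0)"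
  proof -
    consider "\<delta> = 0" | "\<delta> = 1" | "\<delta> = 2" using d by linarith
    then show ?thesis
    proof cases
      case 1
      then have "even \<nu>" using assms(4) by simp
      then obtain k where k: "\<nu> = Suc k" "odd k" using nu by (metis Suc_pred even_Suc neq0_conv not_one_le_zero)
      show ?thesis using colour_H[OF k(2)] k(1) 1 by simp
    next
      case 2 then show ?thesis using colour_P[OF nu] by simp
    next
      case 3 then show ?thesis using colour_E[OF nu] by simp
    qed
  qed
  show ?thesis
  proof (rule chrom_main[where red = redX and S = "Sset \<nu> \<delta>" and B = "Bf \<nu> \<delta>"])
    show "\<And>X. X \<in> orth_vertices n \<nu> \<delta> z \<Longrightarrow> redX X \<in> Sset \<nu> \<delta>" by (rule R1[OF n d zo])
    show "\<And>X Y. X \<in> orth_vertices n \<nu> \<delta> z \<Longrightarrow> Y \<in> orth_vertices n \<nu> \<delta> z \<Longrightarrow>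
        orth_adj n \<nu> \<delta> z X Y \<longleftrightarrow> Bf \<nu> \<delta> (redX X) (redX Y) \<noteq> 0" by (rule R2[OF n d zo])
    show "\<And>u. u \<in> Sset \<nu> \<delta> \<Longrightarrow> \<exists>X\<in>orth_vertices n \<nu> \<delta> z. redX X = u" by (rule R3[OF n d zo])
    show "\<And>u. Bf \<nu> \<delta> u u = 0" by (rule Bf_self)
    show "\<exists>col. (\<forall>u\<in>Sset \<nu> \<delta>. col u < (2::nat) ^ (\<nu> + \<delta> - 1) + 1) \<and>
      (\<forall>u\<in>Sset \<nu> \<delta>. \<forall>v\<in>Sset \<nu> \<delta>. col u = col v \<longrightarrow> Bf \<nu> \<delta> u v = 0)" by (rule UB)
    show "\<And>(k::nat) (g::(nat \<Rightarrow> gf2) \<Rightarrow> nat). \<forall>u\<in>Sset \<nu> \<delta>. g u < k \<Longrightarrow> \<forall>u\<in>Sset \<nu> \<delta>. \<forall>v\<in>Sset \<nu> \<delta>. Bf \<nu> \<delta> u v \<noteq> 0 \<longrightarrow> g u \<noteq> g v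
        \<Longrightarrow> (2::nat) ^ (\<nu> + \<delta> - 1) + 1 \<le> k" by (rule LB_S[OF d nu])
  qed
qed


end
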